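(* Let the setting and the algorithm RandProx-FB be as in the context, and suppose $\mu_f>0$ and $0<\gamma<\frac{2}{L_f}$. For $t\ge0$ let $$\Psi^t:=\frac{1}{\gamma}\|x^t-x^\star\|^2+(1+\omega)\big(\gamma(1+\omega)+2\mu_{h^*}\big)\|u^t-u^\star\|^2,$$ where $x^\star$ is the unique minimizer of $f+h$ and $u^\star=-\nabla f(x^\star)$ is the unique minimizer of $f^*(-\cdot)+h^*$. Then for every $t\ge0$, $\mathbb{E}[\Psi^t]\le c^t\Psi^0$, where $$c:=\max\left((1-\gamma\mu_f)^2,\ (\gamma L_f-1)^2,\ 1-\frac{1+\frac{2}{\gamma}\mu_{h^*}}{(1+\omega)\big(1+\omega+\frac{2}{\gamma}\mu_{h^*}\big)}\right)<1.$$ Moreover, $(x^t)$ and $(\hat{x}^t)$ both converge to $x^\star$ and $(u^t)$ converges to $u^\star$, almost surely.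
   Context: $\mathcal{X}$ is a finite-dimensional real Hilbert space; $f:\mathcal{X}\to\mathbb{R}$ is convex and $L_f$-smooth ($\nabla f$ $L_f$-Lipschitz, $L_f>0$) and $\mu_f$-strongly convex ($f-\frac{\mu_f}{2}\|\cdot\|^2$ convex); $h:\mathcal{X}\to\mathbb{R}\cup\{+\infty\}$ is proper closed convex, and its conjugate $h^*$ is $\mu_{h^*}$-strongly convex for some $\mu_{h^*}\ge0$ (possibly $0$). $\mathrm{prox}_{\gamma\phi}(x):=\arg\min_{x'}(\gamma\phi(x')+\frac12\|x'-x\|^2)$. It is assumed there exists $x^\star$ with $0\in\nabla f(x^\star)+\partial h(x^\star)$. Algorithm RandProx-FB: inputs $x^0,u^0\in\mathcal{X}$, $\gamma>0$, $\omega\ge0$; for $t\ge0$: $\hat{x}^t:=x^t-\gamma\nabla f(x^t)-\gamma u^t$; $d^t:=\mathcal{R}^t\big(\hat{x}^t-\mathrm{prox}_{\gamma(1+\omega)h}(\hat{x}^t+\gamma(1+\omega)u^t)\big)$; $u^{t+1}:=u^t+\frac{1}{\gamma(1+\omega)^2}d^t$; $x^{t+1}:=\hat{x}^t-\frac{1}{1+\omega}d^t$. With $\mathcal{F}_t$ the $\sigma$-algebra generated by $(x^0,u^0),\dots,(x^t,u^t)$ and $r^t:=\hat{x}^t-\mathrm{prox}_{\gamma(1+\omega)h}(\hat{x}^t+\gamma(1+\omega)u^t)$, the random estimate $\mathcal{R}^t(r^t)$ satisfies $\mathbb{E}[\mathcal{R}^t(r^t)\mid\mathcal{F}_t]=r^t$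 and $\mathbb{E}[\|\mathcal{R}^t(r^t)-r^t\|^2\mid\mathcal{F}_t]\le\omega\|r^t\|^2$. *)

theory Defs
  imports "HOL-Analysis.Analysis" "HOL-Probability.Probability"
begin

definition ext_convex :: "('a::real_vector \<Rightarrow> ereal) \<Rightarrow> bool" where
  "ext_convex g \<longleftrightarrow> (\<forall>x y. \<forall>t::real. 0 \<le> t \<and> t \<le> 1 \<longrightarrow>
      g ((1 - t) *\<^sub>R x + t *\<^sub>R y) \<le> ereal (1 - t) * g x + ereal t * g y)"

definition ext_proper :: "('a \<Rightarrow> ereal) \<Rightarrow> bool" where
  "ext_proper g \<longleftrightarrow> (\<exists>x. g x < \<infinity>) \<and> (\<forall>x. - \<infinity> < g x)"

definition ext_closed :: "('a::topological_space \<Rightarrow> ereal) \<Rightarrow> bool" where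
  "ext_closed g \<longleftrightarrow> closed {(x, a::real). g x \<le> ereal a}"

definition conjugate :: "('a::real_inner \<Rightarrow> ereal) \<Rightarrow> 'a \<Rightarrow> ereal" where
  "conjugate g u = (SUP x. ereal (u \<bullet> x) - g x)"

definition ext_strongly_convex :: "real \<Rightarrow> ('a::real_inner \<Rightarrow> ereal) \<Rightarrow> bool" where
  "ext_strongly_convex \<mu> g \<longleftrightarrow> ext_convex (\<lambda>x. g x - ereal (\<mu> / 2 * norm x ^ 2))"

definition subdiff :: "('a::real_inner \<Rightarrow> ereal) \<Rightarrow> 'a \<Rightarrow> 'a set" where
  "subdiff g x = {v. \<forall>y. g x + ereal (v \<bullet> (y - x)) \<le> g y}"

definition prox :: "real \<Rightarrow> ('a::real_normed_vector \<Rightarrow> ereal) \<Rightarrow> 'a \<Rightarrow> 'a" where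
  "prox \<gamma> g x = (THE p. \<forall>y. ereal \<gamma> * g p + ereal (norm (p - x) ^ 2 / 2)
                              \<le> ereal \<gamma> * g y + ereal (norm (y - x) ^ 2 / 2))"

definition hist_algebra :: "'w measure \<Rightarrow> (nat \<Rightarrow> 'w \<Rightarrow> 'a::topological_space)
    \<Rightarrow> (nat \<Rightarrow> 'w \<Rightarrow> 'a) \<Rightarrow> nat \<Rightarrow> 'w measure" where
  "hist_algebra M x u t = sigma (space M)
     (\<Union>i\<le>t. {(\<lambda>\<omega>. (x i \<omega>, u i \<omega>)) -` A \<inter> space M | A. A \<in> sets borel})"

definition rpfb_xhat :: "real \<Rightarrow> ('a::real_vector \<Rightarrow> 'a) \<Rightarrow> 'a \<Rightarrow> 'a \<Rightarrow> 'a" where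
  "rpfb_xhat \<gamma> gradf xt ut = xt - \<gamma> *\<^sub>R gradf xt - \<gamma> *\<^sub>R ut"

definition rpfb_r :: "real \<Rightarrow> real \<Rightarrow> ('a::real_normed_vector \<Rightarrow> ereal) \<Rightarrow> ('a \<Rightarrow> 'a) \<Rightarrow> 'a \<Rightarrow> 'a \<Rightarrow> 'a" where
  "rpfb_r \<gamma> \<omega> h gradf xt ut =
     rpfb_xhat \<gamma> gradf xt ut
       - prox (\<gamma> * (1 + \<omega>)) h (rpfb_xhat \<gamma> gradf xt ut + (\<gamma> * (1 + \<omega>)) *\<^sub>R ut)"

end

theory Submission
  imports Defs
begin

lemma convex_grad_ineq:
  fixes g :: "'a::euclidean_space \<Rightarrow> real"
  assumes cv: "convex_on UNIV g" and dg: "\<And>z. (g has_derivative (\<lambda>v. G z \<bullet> v)) (at z)"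
  shows "g z + G z \<bullet> (y - z) \<le> g y"
proof -
  define \<phi> where "\<phi> t = g (z + t *\<^sub>R (y - z))" for t :: real
  have cphi: "convex_on UNIV \<phi>"
    unfolding \<phi>_def
  proof (rule convex_onI)
    fix a b t :: real assume t: "0 < t" "t < 1"
    have "z + ((1 - t) *\<^sub>R a + t *\<^sub>R b) *\<^sub>R (y - z) =
          (1 - t) *\<^sub>R (z + a *\<^sub>R (y - z)) + t *\<^sub>R (z + b *\<^sub>R (y - z))"
      by (simp add: algebra_simps)
    then show "g (z + ((1 - t) *\<^sub>R a + t *\<^sub>R b) *\<^sub>R (y - z))
       \<le> (1 - t) * g (z + a *\<^sub>R (y - z)) + t * g (z + b *\<^sub>R (y - z))"
      using convex_onD[OF cv, of t] t by simp
  qed simp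
  have d1: "((\<lambda>t. z + t *\<^sub>R (y - z)) has_derivative (\<lambda>t. t *\<^sub>R (y - z))) (at 0)"
    by (auto intro!: derivative_eq_intros)
  have "(\<phi> has_derivative (\<lambda>t. G z \<bullet> (t *\<^sub>R (y - z)))) (at 0)"
  proof -
    have dgz: "(g has_derivative (\<lambda>v. G z \<bullet> v)) (at (z + 0 *\<^sub>R (y - z)))" using dg[of z] by simp
    show ?thesis unfolding \<phi>_def using diff_chain_at[OF d1 dgz] by (simp add: o_def)
  qed
  then have "(\<phi> has_field_derivative (G z \<bullet> (y - z))) (at 0)"
    unfolding has_field_derivative_def by (rule has_derivative_eq_rhs) (auto simp: fun_eq_iff mult.commute)
  from convex_on_imp_above_tangent[OF cphi, of 0 1, simplified, OF this]
  show ?thesis by (simp add: \<phi>_def)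
qed

lemma descent_lemma:
  fixes g :: "'a::euclidean_space \<Rightarrow> real"
  assumes dg: "\<And>z. (g has_derivative (\<lambda>v. G z \<bullet> v)) (at z)"
    and K: "\<And>a b. (G a - G b) \<bullet> (a - b) \<le> K * norm (a - b) ^ 2"
  shows "g y \<le> g x + G x \<bullet> (y - x) + K / 2 * norm (y - x) ^ 2"
proof -
  define \<psi> where "\<psi> t = g (x + t *\<^sub>R (y - x)) - t * (G x \<bullet> (y - x)) - K / 2 * t^2 * norm (y - x) ^ 2" for t :: real
  have "\<psi> 0 \<ge> \<psi> 1"
  proof (rule DERIV_nonpos_imp_nonincreasing[of 0 1])
    fix t :: real assume t: "0 \<le> t" "t \<le> 1"
    have d1: "((\<lambda>t. x + t *\<^sub>R (y - x)) has_derivative (\<lambda>s. s *\<^sub>R (y - x))) (at t)"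
      by (auto intro!: derivative_eq_intros)
    have d2: "((\<lambda>t. g (x + t *\<^sub>R (y - x))) has_derivative (\<lambda>s. G (x + t *\<^sub>R (y - x)) \<bullet> (s *\<^sub>R (y - x)))) (at t)"
      using diff_chain_at[OF d1 dg] by (simp add: o_def)
    have d3: "(\<psi> has_derivative (\<lambda>s. s * (G (x + t *\<^sub>R (y - x)) \<bullet> (y - x)) - s * (G x \<bullet> (y - x)) - K / 2 * (2 * t * s) * norm (y - x) ^ 2)) (at t)"
    proof -
      have p1: "((\<lambda>t. t * (G x \<bullet> (y - x))) has_derivative (\<lambda>s. s * (G x \<bullet> (y - x)))) (at t)"
        by (auto intro!: derivative_eq_intros)
      have p2: "DERIV (\<lambda>t. K / 2 * t^2 * norm (y - x) ^ 2) t :> K / 2 * (2 * t) * norm (y - x) ^ 2"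
        by (auto intro!: derivative_eq_intros)
      have p2': "((\<lambda>t. K / 2 * t^2 * norm (y - x) ^ 2) has_derivative (\<lambda>s. K / 2 * (2 * t * s) * norm (y - x) ^ 2)) (at t)"
        by (rule has_derivative_eq_rhs[OF p2[unfolded has_field_derivative_def]]) (auto simp: fun_eq_iff algebra_simps)
      show ?thesis unfolding \<psi>_def using has_derivative_diff[OF has_derivative_diff[OF d2 p1] p2']
        by (simp add: algebra_simps)
    qed
    then have "DERIV \<psi> t :> (G (x + t *\<^sub>R (y - x)) \<bullet> (y - x) - G x \<bullet> (y - x) - K * t * norm (y - x) ^ 2)"
      unfolding has_field_derivative_def by (rule has_derivative_eq_rhs) (auto simp: fun_eq_iff algebra_simps)
    moreover have "G (x + t *\<^sub>R (y - x)) \<bullet> (y - x) - G x \<bullet> (y - x) - K * t * norm (y - x) ^ 2 \<le> 0"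
    proof -
      have "t * ((G (x + t *\<^sub>R (y - x)) - G x) \<bullet> (y - x)) = (G (x + t *\<^sub>R (y - x)) - G x) \<bullet> ((x + t *\<^sub>R (y - x)) - x)"
        by (simp add: inner_commute)
      also have "\<dots> \<le> K * norm ((x + t *\<^sub>R (y - x)) - x) ^ 2" by (rule K)
      also have "\<dots> = t * (K * t * norm (y - x) ^ 2)" using t by (simp add: power2_eq_square)
      finally have *: "t * ((G (x + t *\<^sub>R (y - x)) - G x) \<bullet> (y - x)) \<le> t * (K * t * norm (y - x) ^ 2)" .
      show ?thesis
      proof (cases "t = 0")
        case True then show ?thesis by (simp add: inner_diff_left)
      next
        case False then have "t > 0" using t by simp
        with * have "(G (x + t *\<^sub>R (y - x)) - G x) \<bullet> (y - x) \<le> K * t * norm (y - x) ^ 2"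
          by (simp add: mult_le_cancel_left_pos)
        then show ?thesis by (simp add: inner_diff_left)
      qed
    qed
    ultimately show "\<exists>y'. DERIV \<psi> t :> y' \<and> y' \<le> 0" by blast
  qed simp
  then show ?thesis by (simp add: \<psi>_def algebra_simps)
qed

lemma cocoercive_one:
  fixes g :: "'a::euclidean_space \<Rightarrow> real"
  assumes cv: "convex_on UNIV g" and dg: "\<And>z. (g has_derivative (\<lambda>v. G z \<bullet> v)) (at z)"
    and K: "\<And>a b. (G a - G b) \<bullet> (a - b) \<le> K * norm (a - b) ^ 2" and Kp: "K > 0"
  shows "g x + G x \<bullet> (y - x) + norm (G y - G x) ^ 2 / (2 * K) \<le> g y"
proof -
  define D where "D = G y - G x"
  define w where "w = y - (1 / K) *\<^sub>R D"
  have 1: "g x + G x \<bullet> (w - x) \<le> g w" by (rule convex_grad_ineq[OF cv dg])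
  have 2: "g w \<le> g y + G y \<bullet> (w - y) + K / 2 * norm (w - y) ^ 2" by (rule descent_lemma[OF dg K])
  have e1: "G x \<bullet> (w - x) = G x \<bullet> (y - x) - (G x \<bullet> D) / K"
    by (simp add: w_def inner_diff_right algebra_simps)
  have e2: "G y \<bullet> (w - y) = - (G y \<bullet> D) / K" by (simp add: w_def)
  have e3: "K / 2 * norm (w - y) ^ 2 = norm D ^ 2 / (2 * K)"
    using Kp by (simp add: w_def power2_eq_square field_simps)
  have e4: "G y \<bullet> D - G x \<bullet> D = norm D ^ 2"
    by (simp add: D_def power2_norm_eq_inner inner_diff_left)
  from 1 2 e1 e2 e3 have "g x + G x \<bullet> (y - x) \<le> g y + (G x \<bullet> D - G y \<bullet> D) / K + norm D ^ 2 / (2 * K)"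
    by (simp add: diff_divide_distrib)
  also have "(G x \<bullet> D - G y \<bullet> D) / K = - (norm D ^ 2 / K)" proof -
    have "G x \<bullet> D - G y \<bullet> D = - (norm D ^ 2)" using e4 by linarith
    then show ?thesis by simp
  qed
  finally show ?thesis using Kp by (simp add: D_def field_simps)
qed

lemma cocoercive_pos:
  fixes g :: "'a::euclidean_space \<Rightarrow> real"
  assumes cv: "convex_on UNIV g" and dg: "\<And>z. (g has_derivative (\<lambda>v. G z \<bullet> v)) (at z)"
    and K: "\<And>a b. (G a - G b) \<bullet> (a - b) \<le> K * norm (a - b) ^ 2" and Kp: "K > 0"
  shows "norm (G x - G y) ^ 2 \<le> K * ((G x - G y) \<bullet> (x - y))"
proof -
  have 1: "g x + G x \<bullet> (y - x) + norm (G y - G x) ^ 2 / (2 * K) \<le> g y" by (rule cocoercive_one[OF assms])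
  have 2: "g y + G y \<bullet> (x - y) + norm (G x - G y) ^ 2 / (2 * K) \<le> g x" by (rule cocoercive_one[OF assms])
  have n: "norm (G y - G x) = norm (G x - G y)" by (rule norm_minus_commute)
  have "G x \<bullet> (y - x) + G y \<bullet> (x - y) = - ((G x - G y) \<bullet> (x - y))"
    by (simp add: inner_diff_left inner_diff_right algebra_simps)
  with 1 2 n have "norm (G x - G y) ^ 2 / K \<le> (G x - G y) \<bullet> (x - y)" by (simp add: field_simps) 
  then show ?thesis using Kp by (simp add: field_simps)
qed

lemma grad_monotone:
  fixes g :: "'a::euclidean_space \<Rightarrow> real"
  assumes cv: "convex_on UNIV g" and dg: "\<And>z. (g has_derivative (\<lambda>v. G z \<bullet> v)) (at z)"
  shows "0 \<le> (G x - G y) \<bullet> (x - y)"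
proof -
  have 1: "g x + G x \<bullet> (y - x) \<le> g y" by (rule convex_grad_ineq[OF cv dg])
  have 2: "g y + G y \<bullet> (x - y) \<le> g x" by (rule convex_grad_ineq[OF cv dg])
  have "G x \<bullet> (y - x) + G y \<bullet> (x - y) = - ((G x - G y) \<bullet> (x - y))"
    by (simp add: inner_diff_left inner_diff_right algebra_simps)
  with 1 2 show ?thesis by linarith
qed

lemma cocoercive:
  fixes g :: "'a::euclidean_space \<Rightarrow> real"
  assumes cv: "convex_on UNIV g" and dg: "\<And>z. (g has_derivative (\<lambda>v. G z \<bullet> v)) (at z)"
    and K: "\<And>a b. (G a - G b) \<bullet> (a - b) \<le> K * norm (a - b) ^ 2" and Kp: "K \<ge> 0"
  shows "norm (G x - G y) ^ 2 \<le> K * ((G x - G y) \<bullet> (x - y))"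
proof -
  define P where "P = (G x - G y) \<bullet> (x - y)"
  have P0: "P \<ge> 0" unfolding P_def by (rule grad_monotone[OF cv dg])
  show ?thesis unfolding P_def[symmetric]
  proof (rule field_le_epsilon)
    fix e :: real assume e: "e > 0"
    define K' where "K' = K + e / (P + 1)"
    have "e / (P + 1) > 0" using e P0 by simp
    then have K'p: "K' > 0" using Kp by (simp add: K'_def)
    have K'b: "(G a - G b) \<bullet> (a - b) \<le> K' * norm (a - b) ^ 2" for a b
    proof -
      have "K * norm (a - b) ^ 2 \<le> K' * norm (a - b) ^ 2"
        using e P0 by (intro mult_right_mono) (auto simp: K'_def)
      with K[of a b] show ?thesis by linarith
    qed
    have "norm (G x - G y) ^ 2 \<le> K' * P" unfolding P_def by (rule cocoercive_pos[OF cv dg K'b K'p])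
    also have "K' * P = K * P + e * (P / (P + 1))" using P0 by (simp add: K'_def field_simps)
    also have "e * (P / (P + 1)) \<le> e * 1" using P0 e by (intro mult_left_mono) auto
    finally show "norm (G x - G y) ^ 2 \<le> K * P + e" by simp
  qed
qed

lemma contraction_real:
  fixes s \<gamma> K A B P :: real
  assumes "\<gamma> > 0" "K \<ge> 0" "B \<le> K * P" "0 \<le> P" "P \<le> K * A" "A \<ge> 0"
  shows "s\<^sup>2 * A - 2 * \<gamma> * s * P + \<gamma>\<^sup>2 * B \<le> max (s\<^sup>2) ((s - \<gamma> * K)\<^sup>2) * A"
proof -
  have "\<gamma>\<^sup>2 * B \<le> \<gamma>\<^sup>2 * (K * P)" using assms by (intro mult_left_mono) auto
  then have 1: "s\<^sup>2 * A - 2 * \<gamma> * s * P + \<gamma>\<^sup>2 * B \<le> s\<^sup>2 * A + (\<gamma>\<^sup>2 * K - 2 * \<gamma> * s) * P"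
    by (simp add: algebra_simps)
  show ?thesis
  proof (cases "\<gamma>\<^sup>2 * K - 2 * \<gamma> * s \<le> 0")
    case True
    then have "(\<gamma>\<^sup>2 * K - 2 * \<gamma> * s) * P \<le> 0" using assms by (simp add: mult_nonpos_nonneg)
    moreover have "s\<^sup>2 * A \<le> max (s\<^sup>2) ((s - \<gamma> * K)\<^sup>2) * A" using assms by (intro mult_right_mono) auto
    ultimately show ?thesis using 1 by linarith
  next
    case False
    then have "(\<gamma>\<^sup>2 * K - 2 * \<gamma> * s) * P \<le> (\<gamma>\<^sup>2 * K - 2 * \<gamma> * s) * (K * A)"
      using assms by (intro mult_left_mono) auto
    moreover have "s\<^sup>2 * A + (\<gamma>\<^sup>2 * K - 2 * \<gamma> * s) * (K * A) = (s - \<gamma> * K)\<^sup>2 * A"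
      by (simp add: power2_eq_square algebra_simps)
    moreover have "(s - \<gamma> * K)\<^sup>2 * A \<le> max (s\<^sup>2) ((s - \<gamma> * K)\<^sup>2) * A" using assms by (intro mult_right_mono) auto
    ultimately show ?thesis using 1 by linarith
  qed
qed

lemma norm_comb_sq:
  fixes a b :: "'a::real_inner"
  shows "norm (p *\<^sub>R a - q *\<^sub>R b) ^ 2 = p\<^sup>2 * norm a ^ 2 - 2 * q * p * (b \<bullet> a) + q\<^sup>2 * norm b ^ 2"
proof -
  have "norm (p *\<^sub>R a - q *\<^sub>R b) ^ 2 = (p *\<^sub>R a - q *\<^sub>R b) \<bullet> (p *\<^sub>R a - q *\<^sub>R b)"
    by (rule power2_norm_eq_inner)
  also have "\<dots> = p\<^sup>2 * (a \<bullet> a) - 2 * q * p * (b \<bullet> a) + q\<^sup>2 * (b \<bullet> b)"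
    by (simp add: inner_diff_left inner_diff_right inner_commute[of a b] algebra_simps power2_eq_square)
  also have "\<dots> = p\<^sup>2 * norm a ^ 2 - 2 * q * p * (b \<bullet> a) + q\<^sup>2 * norm b ^ 2"
    by (simp add: power2_norm_eq_inner)
  finally show ?thesis .
qed

lemma f_facts:
  fixes f :: "'a::euclidean_space \<Rightarrow> real" and gradf :: "'a \<Rightarrow> 'a"
  assumes f_grad: "\<And>z. (f has_derivative (\<lambda>v. gradf z \<bullet> v)) (at z)"
    and f_smooth: "L-lipschitz_on UNIV gradf"
    and f_strong: "convex_on UNIV (\<lambda>z. f z - \<mu> / 2 * norm z ^ 2)"
    and \<gamma>: "\<gamma> > 0"
  shows "\<mu> \<le> L"
    and "norm ((x - \<gamma> *\<^sub>R gradf x) - (y - \<gamma> *\<^sub>R gradf y)) ^ 2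
          \<le> max ((1 - \<gamma> * \<mu>)\<^sup>2) ((\<gamma> * L - 1)\<^sup>2) * norm (x - y) ^ 2"
proof -
  define g where "g z = f z - \<mu> / 2 * norm z ^ 2" for z
  define G where "G z = gradf z - \<mu> *\<^sub>R z" for z
  have cv: "convex_on UNIV g" using f_strong by (simp add: g_def[abs_def])
  have dg: "(g has_derivative (\<lambda>v. G z \<bullet> v)) (at z)" for z
  proof -
    have "((\<lambda>z. f z - \<mu> / 2 * (z \<bullet> z)) has_derivative (\<lambda>v. gradf z \<bullet> v - \<mu> / 2 * (z \<bullet> v + v \<bullet> z))) (at z)"
      by (auto intro!: derivative_eq_intros f_grad)
    then show ?thesis unfolding g_def G_def power2_norm_eq_inner
      by (rule has_derivative_eq_rhs) (auto simp: fun_eq_iff inner_diff_left inner_commute algebra_simps)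
  qed
  have lip: "(gradf a - gradf b) \<bullet> (a - b) \<le> L * norm (a - b) ^ 2" for a b
  proof -
    have "(gradf a - gradf b) \<bullet> (a - b) \<le> norm (gradf a - gradf b) * norm (a - b)"
      by (rule norm_cauchy_schwarz)
    also have "\<dots> \<le> L * norm (a - b) * norm (a - b)"
      using lipschitz_onD[OF f_smooth, of a b] by (intro mult_right_mono) (auto simp: dist_norm)
    finally show ?thesis by (simp add: power2_eq_square mult.assoc)
  qed
  have Gexp: "(G a - G b) \<bullet> (a - b) = (gradf a - gradf b) \<bullet> (a - b) - \<mu> * norm (a - b) ^ 2" for a b
    by (simp add: G_def power2_norm_eq_inner inner_diff_left inner_diff_right algebra_simps)
  have K: "(G a - G b) \<bullet> (a - b) \<le> (L - \<mu>) * norm (a - b) ^ 2" for a b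
    using lip[of a b] Gexp[of a b] by (simp add: algebra_simps)
  show mL: "\<mu> \<le> L"
  proof -
    obtain b :: 'a where b: "b \<in> Basis" using nonempty_Basis by blast
    have "0 \<le> (G b - G 0) \<bullet> (b - 0)" by (rule grad_monotone[OF cv dg])
    with K[of b 0] have "0 \<le> (L - \<mu>) * norm b ^ 2" by simp
    moreover have "norm b ^ 2 > 0" using b by (simp add: nonzero_Basis)
    ultimately show ?thesis by (simp add: zero_le_mult_iff)
  qed
  define a where "a = x - y"
  define bb where "bb = G x - G y"
  have Kp: "L - \<mu> \<ge> 0" using mL by simp
  have cc: "norm bb ^ 2 \<le> (L - \<mu>) * (bb \<bullet> a)" unfolding a_def bb_def
    by (rule cocoercive[OF cv dg K Kp])
  have P0: "0 \<le> bb \<bullet> a" unfolding a_def bb_def by (rule grad_monotone[OF cv dg])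
  have PA: "bb \<bullet> a \<le> (L - \<mu>) * norm a ^ 2"
  proof -
    have CS: "bb \<bullet> a \<le> norm bb * norm a" by (rule norm_cauchy_schwarz)
    have "norm bb \<le> (L - \<mu>) * norm a"
    proof (cases "norm bb = 0")
      case True then show ?thesis using Kp by simp
    next
      case False
      have "norm bb * norm bb \<le> (L - \<mu>) * (norm bb * norm a)"
        using cc mult_left_mono[OF CS Kp] by (simp add: power2_eq_square)
      then have "norm bb * norm bb \<le> ((L - \<mu>) * norm a) * norm bb"
        by (simp add: algebra_simps)
      then show ?thesis using False by (simp add: mult_le_cancel_right)
    qed
    then have "norm bb * norm a \<le> (L - \<mu>) * norm a * norm a" by (intro mult_right_mono) auto
    with CS show ?thesis by (simp add: power2_eq_square mult.assoc)
  qed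
  have vec: "(x - \<gamma> *\<^sub>R gradf x) - (y - \<gamma> *\<^sub>R gradf y) = (1 - \<gamma> * \<mu>) *\<^sub>R a - \<gamma> *\<^sub>R bb"
    by (simp add: a_def bb_def G_def algebra_simps)
  have nexp: "norm ((1 - \<gamma> * \<mu>) *\<^sub>R a - \<gamma> *\<^sub>R bb) ^ 2
      = (1 - \<gamma> * \<mu>)\<^sup>2 * norm a ^ 2 - 2 * \<gamma> * (1 - \<gamma> * \<mu>) * (bb \<bullet> a) + \<gamma>\<^sup>2 * norm bb ^ 2"
    by (rule norm_comb_sq)
  have "(1 - \<gamma> * \<mu>)\<^sup>2 * norm a ^ 2 - 2 * \<gamma> * (1 - \<gamma> * \<mu>) * (bb \<bullet> a) + \<gamma>\<^sup>2 * norm bb ^ 2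
      \<le> max ((1 - \<gamma> * \<mu>)\<^sup>2) ((1 - \<gamma> * \<mu> - \<gamma> * (L - \<mu>))\<^sup>2) * norm a ^ 2"
    by (rule contraction_real[OF \<gamma> Kp cc P0 PA]) simp
  moreover have "(1 - \<gamma> * \<mu> - \<gamma> * (L - \<mu>))\<^sup>2 = (\<gamma> * L - 1)\<^sup>2"
    by (simp add: power2_eq_square algebra_simps)
  ultimately show "norm ((x - \<gamma> *\<^sub>R gradf x) - (y - \<gamma> *\<^sub>R gradf y)) ^ 2
          \<le> max ((1 - \<gamma> * \<mu>)\<^sup>2) ((\<gamma> * L - 1)\<^sup>2) * norm (x - y) ^ 2"
    using vec nexp by (simp add: a_def)
qed

lemma le0_from_small:
  fixes X c :: real
  assumes "\<And>t. 0 < t \<Longrightarrow> t \<le> 1 \<Longrightarrow> X \<le> c * t"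
  shows "X \<le> 0"
proof (rule ccontr)
  assume X: "\<not> X \<le> 0"
  show False
  proof (cases "c \<le> 0")
    case True
    with assms[of 1] X show False by simp
  next
    case False
    define t where "t = min 1 (X / (2 * c))"
    have t0: "0 < t" "t \<le> 1" using X False by (auto simp: t_def)
    have "c * t \<le> c * (X / (2 * c))" using False by (intro mult_left_mono) (auto simp: t_def)
    also have "\<dots> = X / 2" using False by simp
    finally show False using assms[OF t0] X by simp
  qed
qed

lemma norm_add_scale_sq:
  fixes v e :: "'a::real_inner"
  shows "norm (v + t *\<^sub>R e) ^ 2 = norm v ^ 2 + 2 * t * (v \<bullet> e) + t\<^sup>2 * norm e ^ 2"
proof -
  have "norm (v + t *\<^sub>R e) ^ 2 = (v + t *\<^sub>R e) \<bullet> (v + t *\<^sub>R e)" by (rule power2_norm_eq_inner)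
  also have "\<dots> = v \<bullet> v + 2 * t * (v \<bullet> e) + t\<^sup>2 * (e \<bullet> e)"
    by (simp add: inner_add_left inner_add_right inner_commute[of e v] algebra_simps power2_eq_square)
  finally show ?thesis by (simp add: power2_norm_eq_inner)
qed

lemma ext_convex_subgrad_quad:
  fixes k :: "'a::real_inner \<Rightarrow> ereal"
  assumes cv: "ext_convex k" and fin: "\<And>w. k w > -\<infinity>" and kv: "k v \<noteq> \<infinity>"
    and ineq: "\<And>w. k v + ereal (a / 2 * norm v ^ 2 + b \<bullet> v + p \<bullet> (w - v)) \<le> k w + ereal (a / 2 * norm w ^ 2 + b \<bullet> w)"
  shows "k v + ereal ((p - a *\<^sub>R v - b) \<bullet> (w - v)) \<le> k w"
proof (cases "k w = \<infinity>")
  case True then show ?thesis by simp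
next
  case False
  obtain V where V: "k v = ereal V" using kv fin[of v] by (cases "k v") auto
  obtain W where W: "k w = ereal W" using False fin[of w] by (cases "k w") auto
  have "V + (p - a *\<^sub>R v - b) \<bullet> (w - v) - W \<le> 0"
  proof (rule le0_from_small)
    fix t :: real assume t: "0 < t" "t \<le> 1"
    define wt where "wt = (1 - t) *\<^sub>R v + t *\<^sub>R w"
    have "k wt \<le> ereal (1 - t) * k v + ereal t * k w"
      using cv t unfolding ext_convex_def wt_def by auto
    then have kwt: "k wt \<le> ereal ((1 - t) * V + t * W)" by (simp add: V W)
    then obtain Kt where Kt: "k wt = ereal Kt" using fin[of wt] by (cases "k wt") auto
    from kwt Kt have Ktle: "Kt \<le> (1 - t) * V + t * W" by simp
    have e1: "p \<bullet> (wt - v) = t * (p \<bullet> (w - v))" by (simp add: wt_def algebra_simps inner_diff_right)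
    have e2: "b \<bullet> wt = b \<bullet> v + t * (b \<bullet> (w - v))" by (simp add: wt_def algebra_simps inner_diff_right inner_add_right)
    have "wt = v + t *\<^sub>R (w - v)" by (simp add: wt_def algebra_simps)
    then have e3: "norm wt ^ 2 = norm v ^ 2 + 2 * t * (v \<bullet> (w - v)) + t\<^sup>2 * norm (w - v) ^ 2"
      using norm_add_scale_sq by simp
    have "V + (a / 2 * norm v ^ 2 + b \<bullet> v + p \<bullet> (wt - v)) \<le> Kt + (a / 2 * norm wt ^ 2 + b \<bullet> wt)"
      using ineq[of wt] by (simp add: V Kt)
    then have I: "V + (a / 2 * norm v ^ 2 + b \<bullet> v + t * (p \<bullet> (w - v))) \<le> Kt + (a / 2 * (norm v ^ 2 + 2 * t * (v \<bullet> (w - v)) + t\<^sup>2 * norm (w - v) ^ 2) + (b \<bullet> v + t * (b \<bullet> (w - v))))"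
      by (simp only: e1 e2 e3)
    have ex: "(p - a *\<^sub>R v - b) \<bullet> (w - v) = p \<bullet> (w - v) - a * (v \<bullet> (w - v)) - b \<bullet> (w - v)"
      by (simp add: inner_diff_left)
    have "t * (V + (p - a *\<^sub>R v - b) \<bullet> (w - v) - W) \<le> t * (a / 2 * norm (w - v) ^ 2 * t)"
      unfolding ex using I Ktle by (simp add: algebra_simps power2_eq_square)
    then show "V + (p - a *\<^sub>R v - b) \<bullet> (w - v) - W \<le> a / 2 * norm (w - v) ^ 2 * t"
      using t by (simp add: mult_le_cancel_left_pos)
  qed
  then show ?thesis by (simp add: V W)
qed

lemma subdiff_finite:
  assumes "ext_proper h" "v \<in> subdiff h x"
  shows "\<bar>h x\<bar> \<noteq> \<infinity>"
proof -
  obtain y where y: "h y < \<infinity>" using assms(1) unfolding ext_proper_def by blast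
  have "h x + ereal (v \<bullet> (y - x)) \<le> h y" using assms(2) unfolding subdiff_def by blast
  then have "h x \<noteq> \<infinity>" using y by auto
  moreover have "h x \<noteq> -\<infinity>" using assms(1) unfolding ext_proper_def by auto
  ultimately show ?thesis by auto
qed

lemma subdiff_mono:
  assumes "ext_proper h" "v1 \<in> subdiff h x1" "v2 \<in> subdiff h x2"
  shows "0 \<le> (v1 - v2) \<bullet> (x1 - x2)"
proof -
  obtain H1 where H1: "h x1 = ereal H1" using subdiff_finite[OF assms(1,2)] by (cases "h x1") auto
  obtain H2 where H2: "h x2 = ereal H2" using subdiff_finite[OF assms(1,3)] by (cases "h x2") auto
  have "h x1 + ereal (v1 \<bullet> (x2 - x1)) \<le> h x2" using assms(2) unfolding subdiff_def by blast
  then have 1: "H1 + v1 \<bullet> (x2 - x1) \<le> H2" by (simp add: H1 H2)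
  have "h x2 + ereal (v2 \<bullet> (x1 - x2)) \<le> h x1" using assms(3) unfolding subdiff_def by blast
  then have 2: "H2 + v2 \<bullet> (x1 - x2) \<le> H1" by (simp add: H1 H2)
  have "v1 \<bullet> (x2 - x1) + v2 \<bullet> (x1 - x2) = - ((v1 - v2) \<bullet> (x1 - x2))"
    by (simp add: inner_diff_left inner_diff_right algebra_simps)
  with 1 2 show ?thesis by linarith
qed

definition prox_obj :: "real \<Rightarrow> ('a::real_normed_vector \<Rightarrow> ereal) \<Rightarrow> 'a \<Rightarrow> 'a \<Rightarrow> ereal" where
  "prox_obj \<tau> h z p = ereal \<tau> * h p + ereal (norm (p - z) ^ 2 / 2)"

lemma prox_min_subgrad:
  fixes h :: "'a::real_inner \<Rightarrow> ereal"
  assumes \<tau>: "\<tau> > 0" and cv: "ext_convex h" and pr: "ext_proper h"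
    and mn: "\<And>y. prox_obj \<tau> h z p \<le> prox_obj \<tau> h z y"
  shows "(1 / \<tau>) *\<^sub>R (z - p) \<in> subdiff h p"
proof -
  have fin: "h w > -\<infinity>" for w using pr unfolding ext_proper_def by auto
  obtain y0 where y0: "h y0 < \<infinity>" using pr unfolding ext_proper_def by blast
  have "prox_obj \<tau> h z p \<le> prox_obj \<tau> h z y0" by (rule mn)
  moreover have "prox_obj \<tau> h z y0 < \<infinity>" using y0 fin[of y0] \<tau>
    by (cases "h y0") (auto simp: prox_obj_def)
  ultimately have hp: "h p \<noteq> \<infinity>" using \<tau> by (auto simp: prox_obj_def)
  obtain P where P: "h p = ereal P" using hp fin[of p] by (cases "h p") auto
  have "h p + ereal ((0 - (1 / \<tau>) *\<^sub>R p - (- (1 / \<tau>) *\<^sub>R z)) \<bullet> (w - p)) \<le> h w" for w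
  proof (rule ext_convex_subgrad_quad[OF cv fin hp])
    fix w
    show "h p + ereal (1 / \<tau> / 2 * (norm p)\<^sup>2 + - (1 / \<tau>) *\<^sub>R z \<bullet> p + 0 \<bullet> (w - p))
         \<le> h w + ereal (1 / \<tau> / 2 * (norm w)\<^sup>2 + - (1 / \<tau>) *\<^sub>R z \<bullet> w)"
    proof (cases "h w = \<infinity>")
      case True then show ?thesis by (simp add: P)
    next
      case False
      obtain W where W: "h w = ereal W" using False fin[of w] by (cases "h w") auto
      have "prox_obj \<tau> h z p \<le> prox_obj \<tau> h z w" by (rule mn)
      then have "\<tau> * P + norm (p - z) ^ 2 / 2 \<le> \<tau> * W + norm (w - z) ^ 2 / 2"
        by (simp add: prox_obj_def P W)
      moreover have "norm (p - z) ^ 2 = norm p ^ 2 - 2 * (z \<bullet> p) + norm z ^ 2"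
        by (simp add: power2_norm_eq_inner inner_diff_left inner_diff_right inner_commute)
      moreover have "norm (w - z) ^ 2 = norm w ^ 2 - 2 * (z \<bullet> w) + norm z ^ 2"
        by (simp add: power2_norm_eq_inner inner_diff_left inner_diff_right inner_commute)
      ultimately have "\<tau> * (P + 1 / \<tau> / 2 * (norm p)\<^sup>2 - 1 / \<tau> * (z \<bullet> p))
          \<le> \<tau> * (W + 1 / \<tau> / 2 * (norm w)\<^sup>2 - 1 / \<tau> * (z \<bullet> w))"
        using \<tau> by (simp add: algebra_simps add_divide_distrib diff_divide_distrib)
      then have "P + 1 / \<tau> / 2 * (norm p)\<^sup>2 - 1 / \<tau> * (z \<bullet> p) \<le> W + 1 / \<tau> / 2 * (norm w)\<^sup>2 - 1 / \<tau> * (z \<bullet> w)"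
        using \<tau> by (simp add: mult_le_cancel_left_pos)
      then show ?thesis by (simp add: P W)
    qed
  qed
  moreover have "(0 - (1 / \<tau>) *\<^sub>R p - (- (1 / \<tau>) *\<^sub>R z)) = (1 / \<tau>) *\<^sub>R (z - p)"
    by (simp add: algebra_simps)
  ultimately show ?thesis unfolding subdiff_def by auto
qed

lemma prox_min_unique:
  fixes h :: "'a::real_inner \<Rightarrow> ereal"
  assumes \<tau>: "\<tau> > 0" and cv: "ext_convex h" and pr: "ext_proper h"
    and mn1: "\<And>y. prox_obj \<tau> h z p1 \<le> prox_obj \<tau> h z y"
    and mn2: "\<And>y. prox_obj \<tau> h z p2 \<le> prox_obj \<tau> h z y"
  shows "p1 = p2"
proof -
  have "0 \<le> ((1 / \<tau>) *\<^sub>R (z - p1) - (1 / \<tau>) *\<^sub>R (z - p2)) \<bullet> (p1 - p2)"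
    by (rule subdiff_mono[OF pr prox_min_subgrad[OF assms(1-3) mn1] prox_min_subgrad[OF assms(1-3) mn2]])
  also have "((1 / \<tau>) *\<^sub>R (z - p1) - (1 / \<tau>) *\<^sub>R (z - p2)) \<bullet> (p1 - p2) = - (1 / \<tau>) * ((p1 - p2) \<bullet> (p1 - p2))"
    by (simp add: algebra_simps inner_diff_left inner_diff_right inner_commute)
  finally have "(p1 - p2) \<bullet> (p1 - p2) / \<tau> \<le> 0" by simp
  then have "(p1 - p2) \<bullet> (p1 - p2) \<le> 0" using \<tau> by (simp add: divide_le_0_iff)
  then show ?thesis by (metis inner_eq_zero_iff inner_ge_zero order_antisym right_minus_eq)
qed

lemma prox_min_exists:
  fixes h :: "'a::euclidean_space \<Rightarrow> ereal"
  assumes \<tau>: "\<tau> > 0" and pr: "ext_proper h" and cl: "ext_closed h" and sub: "v0 \<in> subdiff h x0"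
  shows "\<exists>p. \<forall>y. prox_obj \<tau> h z p \<le> prox_obj \<tau> h z y"
proof -
  have fin: "h w > -\<infinity>" for w using pr unfolding ext_proper_def by auto
  obtain H0 where H0: "h x0 = ereal H0" using subdiff_finite[OF pr sub] by (cases "h x0") auto
  define c where "c = z - \<tau> *\<^sub>R v0"
  define C1 where "C1 = \<tau> * H0 + \<tau> * (v0 \<bullet> (z - x0)) - \<tau>\<^sup>2 * norm v0 ^ 2 / 2"
  have lower: "ereal (C1 + norm (y - c) ^ 2 / 2) \<le> prox_obj \<tau> h z y" for y
  proof (cases "h y = \<infinity>")
    case True then show ?thesis using \<tau> by (simp add: prox_obj_def)
  next
    case False
    obtain Y where Y: "h y = ereal Y" using False fin[of y] by (cases "h y") auto
    have "h x0 + ereal (v0 \<bullet> (y - x0)) \<le> h y" using sub unfolding subdiff_def by blast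
    then have 1: "H0 + v0 \<bullet> (y - x0) \<le> Y" by (simp add: H0 Y)
    have e: "y - c = (y - z) + \<tau> *\<^sub>R v0" by (simp add: c_def)
    have 2: "norm (y - c) ^ 2 = norm (y - z) ^ 2 + 2 * \<tau> * ((y - z) \<bullet> v0) + \<tau>\<^sup>2 * norm v0 ^ 2"
      unfolding e by (rule norm_add_scale_sq)
    have 3: "v0 \<bullet> (y - x0) = v0 \<bullet> (z - x0) + (y - z) \<bullet> v0"
      by (simp add: inner_diff_left inner_diff_right inner_commute)
    have "C1 + norm (y - c) ^ 2 / 2 = \<tau> * (H0 + v0 \<bullet> (y - x0)) + norm (y - z) ^ 2 / 2"
      unfolding C1_def 2 3 by (simp add: algebra_simps add_divide_distrib diff_divide_distrib)
    also have "\<dots> \<le> \<tau> * Y + norm (y - z) ^ 2 / 2" using 1 \<tau> by simp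
    finally show ?thesis by (simp add: prox_obj_def Y)
  qed
  define m where "m = (INF y. prox_obj \<tau> h z y)"
  obtain y1 where y1: "h y1 < \<infinity>" using pr unfolding ext_proper_def by blast
  have "m \<le> prox_obj \<tau> h z y1" unfolding m_def by (rule INF_lower) simp
  also have "prox_obj \<tau> h z y1 < \<infinity>" using y1 fin[of y1] \<tau>
    by (cases "h y1") (auto simp: prox_obj_def)
  finally have mfin: "m < \<infinity>" .
  have "ereal C1 \<le> m" unfolding m_def
  proof (rule INF_greatest)
    fix y have "ereal C1 \<le> ereal (C1 + norm (y - c) ^ 2 / 2)" by simp
    also note lower[of y]
    finally show "ereal C1 \<le> prox_obj \<tau> h z y" .
  qed
  with mfin obtain M where M: "m = ereal M" by (cases m) auto
  have "\<exists>p. prox_obj \<tau> h z p < ereal (M + 1 / real (Suc n))" for n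
  proof -
    have "m < ereal (M + 1 / real (Suc n))" using M by simp
    then show ?thesis unfolding m_def by (simp add: INF_less_iff)
  qed
  then obtain p where p: "\<And>n. prox_obj \<tau> h z (p n) < ereal (M + 1 / real (Suc n))" by metis
  define H where "H n = real_of_ereal (h (p n))" for n
  have Hn: "h (p n) = ereal (H n)" for n
  proof -
    have "h (p n) \<noteq> \<infinity>" using p[of n] \<tau> by (auto simp: prox_obj_def)
    then show ?thesis using fin[of "p n"] unfolding H_def by (cases "h (p n)") auto
  qed
  have Fn: "\<tau> * H n + norm (p n - z) ^ 2 / 2 < M + 1 / real (Suc n)" for n
    using p[of n] by (simp add: prox_obj_def Hn)
  define R where "R = sqrt (2 * (M + 1 - C1))"
  have inball: "p n \<in> cball c R" for n
  proof -
    have "ereal (C1 + norm (p n - c) ^ 2 / 2) < ereal (M + 1 / real (Suc n))"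
      using lower[of "p n"] p[of n] by (rule le_less_trans)
    then have "C1 + norm (p n - c) ^ 2 / 2 < M + 1 / real (Suc n)" by simp
    moreover have "1 / real (Suc n) \<le> 1" by simp
    ultimately have "C1 + norm (p n - c) ^ 2 / 2 \<le> M + 1" by linarith
    then have "norm (p n - c) ^ 2 \<le> 2 * (M + 1 - C1)" by simp
    then have "norm (p n - c) \<le> R" unfolding R_def by (rule real_le_rsqrt)
    then show ?thesis by (simp add: dist_norm norm_minus_commute)
  qed
  have "seq_compact (cball c R)" by (rule compact_imp_seq_compact) simp
  then obtain l r where r: "strict_mono r" and lim: "(p \<circ> r) \<longlonglongrightarrow> l"
    unfolding seq_compact_def using inball by blast
  define a where "a n = (M + 1 / real (Suc n) - norm (p n - z) ^ 2 / 2) / \<tau>" for n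
  define A where "A = (M - norm (l - z) ^ 2 / 2) / \<tau>"
  have epi: "(p (r n), a (r n)) \<in> {(x, a::real). h x \<le> ereal a}" for n
  proof -
    have "H (r n) * \<tau> \<le> M + 1 / real (Suc (r n)) - norm (p (r n) - z) ^ 2 / 2"
      using Fn[of "r n"] by (simp add: mult.commute)
    then have "H (r n) \<le> a (r n)" using \<tau> unfolding a_def by (simp add: pos_le_divide_eq)
    then show ?thesis by (simp add: Hn)
  qed
  have lim1: "(\<lambda>n. 1 / real (Suc (r n))) \<longlonglongrightarrow> 0"
    using LIMSEQ_subseq_LIMSEQ[OF LIMSEQ_inverse_real_of_nat r] by (simp add: o_def inverse_eq_divide)
  have limp: "(\<lambda>n. p (r n)) \<longlonglongrightarrow> l" using lim by (simp add: o_def)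
  have lim2: "(\<lambda>n. M + 1 / real (Suc (r n))) \<longlonglongrightarrow> M"
    using tendsto_add[OF tendsto_const lim1, of M] by simp
  have lima: "(\<lambda>n. a (r n)) \<longlonglongrightarrow> A"
    unfolding a_def A_def
    using \<tau> by (intro tendsto_intros lim2 limp) auto
    have "(\<lambda>n. (p (r n), a (r n))) \<longlonglongrightarrow> (l, A)" by (intro tendsto_Pair limp lima)
  then have "(l, A) \<in> {(x, a::real). h x \<le> ereal a}"
    using closed_sequentially[OF cl[unfolded ext_closed_def], of "\<lambda>n. (p (r n), a (r n))"] epi by blast
  then have hl: "h l \<le> ereal A" by simp
  have "prox_obj \<tau> h z l \<le> ereal \<tau> * ereal A + ereal (norm (l - z) ^ 2 / 2)"
    unfolding prox_obj_def using hl \<tau> by (intro add_right_mono ereal_mult_left_mono) auto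
  also have "\<dots> = m" using \<tau> by (simp add: M A_def)
  finally have "prox_obj \<tau> h z l \<le> m" .
  moreover have "m \<le> prox_obj \<tau> h z y" for y unfolding m_def by (rule INF_lower) simp
  ultimately show ?thesis by (meson order_trans)
qed

lemma prox_is_min:
  fixes h :: "'a::euclidean_space \<Rightarrow> ereal"
  assumes \<tau>: "\<tau> > 0" and cv: "ext_convex h" and pr: "ext_proper h" and cl: "ext_closed h"
    and sub: "v0 \<in> subdiff h x0"
  shows "prox_obj \<tau> h z (prox \<tau> h z) \<le> prox_obj \<tau> h z y"
proof -
  have ex1: "\<exists>!p. \<forall>y. prox_obj \<tau> h z p \<le> prox_obj \<tau> h z y"
    using prox_min_exists[OF \<tau> pr cl sub] prox_min_unique[OF \<tau> cv pr] by blast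
  have "\<forall>y. prox_obj \<tau> h z (prox \<tau> h z) \<le> prox_obj \<tau> h z y"
    unfolding prox_def using theI'[OF ex1] by (simp add: prox_obj_def)
  then show ?thesis by blast
qed

lemma prox_subgrad:
  fixes h :: "'a::euclidean_space \<Rightarrow> ereal"
  assumes \<tau>: "\<tau> > 0" and cv: "ext_convex h" and pr: "ext_proper h" and cl: "ext_closed h"
    and sub: "v0 \<in> subdiff h x0"
  shows "(1 / \<tau>) *\<^sub>R (z - prox \<tau> h z) \<in> subdiff h (prox \<tau> h z)"
  by (rule prox_min_subgrad[OF \<tau> cv pr prox_is_min[OF assms]])

lemma prox_nonexp:
  fixes h :: "'a::euclidean_space \<Rightarrow> ereal"
  assumes \<tau>: "\<tau> > 0" and cv: "ext_convex h" and pr: "ext_proper h" and cl: "ext_closed h"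
    and sub: "v0 \<in> subdiff h x0"
  shows "norm (prox \<tau> h z1 - prox \<tau> h z2) \<le> norm (z1 - z2)"
proof -
  define p1 where "p1 = prox \<tau> h z1"
  define p2 where "p2 = prox \<tau> h z2"
  have "0 \<le> ((1 / \<tau>) *\<^sub>R (z1 - p1) - (1 / \<tau>) *\<^sub>R (z2 - p2)) \<bullet> (p1 - p2)"
    unfolding p1_def p2_def by (rule subdiff_mono[OF pr prox_subgrad[OF assms] prox_subgrad[OF assms]])
  also have "\<dots> = (1 / \<tau>) * ((z1 - z2) \<bullet> (p1 - p2) - (p1 - p2) \<bullet> (p1 - p2))"
    by (simp add: algebra_simps inner_diff_left inner_diff_right)
  finally have "(p1 - p2) \<bullet> (p1 - p2) \<le> (z1 - z2) \<bullet> (p1 - p2)" using \<tau>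
    by (simp add: zero_le_divide_iff)
  also have "\<dots> \<le> norm (z1 - z2) * norm (p1 - p2)" by (rule norm_cauchy_schwarz)
  finally have "norm (p1 - p2) * norm (p1 - p2) \<le> norm (z1 - z2) * norm (p1 - p2)"
    by (simp add: power2_norm_eq_inner[symmetric] power2_eq_square)
  then show ?thesis unfolding p1_def[symmetric] p2_def[symmetric]
    by (cases "norm (p1 - p2) = 0") (auto simp: mult_le_cancel_right)
qed

lemma conj_lower: "ereal (w \<bullet> p) - h p \<le> conjugate h w"
  unfolding conjugate_def by (rule SUP_upper) simp

lemma conj_at:
  assumes pr: "ext_proper h" and sub: "v \<in> subdiff h p"
  shows "conjugate h v = ereal (v \<bullet> p) - h p"
proof (rule antisym)
  obtain P where P: "h p = ereal P" using subdiff_finite[OF pr sub] by (cases "h p") auto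
  show "conjugate h v \<le> ereal (v \<bullet> p) - h p"
    unfolding conjugate_def
  proof (rule SUP_least)
    fix x
    have le: "h p + ereal (v \<bullet> (x - p)) \<le> h x" using sub unfolding subdiff_def by blast
    show "ereal (v \<bullet> x) - h x \<le> ereal (v \<bullet> p) - h p"
    proof (cases "h x")
      case (real X)
      with le P have "P + v \<bullet> (x - p) \<le> X" by simp
      then show ?thesis using real P by (simp add: inner_diff_right)
    next
      case PInf then show ?thesis by simp
    next
      case MInf then show ?thesis using pr unfolding ext_proper_def by auto
    qed
  qed
qed (rule conj_lower)

lemma hstar_mono:
  fixes h :: "'a::real_inner \<Rightarrow> ereal"
  assumes strong: "ext_strongly_convex \<mu> (conjugate h)" and pr: "ext_proper h"
    and s1: "v1 \<in> subdiff h p1" and s2: "v2 \<in> subdiff h p2"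
  shows "\<mu> * norm (v1 - v2) ^ 2 \<le> (p1 - p2) \<bullet> (v1 - v2)"
proof -
  define k where "k w = conjugate h w - ereal (\<mu> / 2 * norm w ^ 2)" for w
  have cv: "ext_convex k" using strong unfolding ext_strongly_convex_def k_def[abs_def] .
  obtain P1 where P1: "h p1 = ereal P1" using subdiff_finite[OF pr s1] by (cases "h p1") auto
  obtain P2 where P2: "h p2 = ereal P2" using subdiff_finite[OF pr s2] by (cases "h p2") auto
  have cfin: "conjugate h w > -\<infinity>" for w
  proof -
    have "ereal (w \<bullet> p1) - h p1 \<le> conjugate h w" by (rule conj_lower)
    then show ?thesis using P1 by auto
  qed
  have kfin: "k w > -\<infinity>" for w using cfin[of w] unfolding k_def by (cases "conjugate h w") auto
  have c1: "conjugate h v1 = ereal (v1 \<bullet> p1 - P1)" using conj_at[OF pr s1] P1 by simp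
  have c2: "conjugate h v2 = ereal (v2 \<bullet> p2 - P2)" using conj_at[OF pr s2] P2 by simp
  have key: "k v + ereal ((p - \<mu> *\<^sub>R v - 0) \<bullet> (w - v)) \<le> k w"
    if cv0: "conjugate h v = ereal (v \<bullet> p - P)" and hp: "h p = ereal P" for v p P w
  proof (rule ext_convex_subgrad_quad[OF cv kfin])
    show "k v \<noteq> \<infinity>" using cv0 by (simp add: k_def)
    fix w
    have "ereal (w \<bullet> p) - h p \<le> conjugate h w" by (rule conj_lower)
    then have A: "ereal (v \<bullet> p - P + p \<bullet> (w - v)) \<le> conjugate h w"
      using hp by (simp add: inner_diff_right inner_commute)
    show "k v + ereal (\<mu> / 2 * (norm v)\<^sup>2 + 0 \<bullet> v + p \<bullet> (w - v)) \<le> k w + ereal (\<mu> / 2 * (norm w)\<^sup>2 + 0 \<bullet> w)"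
    proof (cases "conjugate h w")
      case (real C)
      then show ?thesis using A by (simp add: k_def cv0)
    next
      case PInf then show ?thesis by (simp add: k_def cv0)
    next
      case MInf then show ?thesis using cfin[of w] by simp
    qed
  qed
  have 1: "k v1 + ereal ((p1 - \<mu> *\<^sub>R v1 - 0) \<bullet> (v2 - v1)) \<le> k v2" by (rule key[OF c1 P1])
  have 2: "k v2 + ereal ((p2 - \<mu> *\<^sub>R v2 - 0) \<bullet> (v1 - v2)) \<le> k v1" by (rule key[OF c2 P2])
  have k1: "k v1 = ereal (v1 \<bullet> p1 - P1 - \<mu> / 2 * norm v1 ^ 2)" by (simp add: k_def c1)
  have k2: "k v2 = ereal (v2 \<bullet> p2 - P2 - \<mu> / 2 * norm v2 ^ 2)" by (simp add: k_def c2)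
  from 1 2 have "(p1 - \<mu> *\<^sub>R v1) \<bullet> (v2 - v1) + (p2 - \<mu> *\<^sub>R v2) \<bullet> (v1 - v2) \<le> 0"
    unfolding k1 k2 by simp
  moreover have "(p1 - \<mu> *\<^sub>R v1) \<bullet> (v2 - v1) + (p2 - \<mu> *\<^sub>R v2) \<bullet> (v1 - v2)
      = \<mu> * ((v1 - v2) \<bullet> (v1 - v2)) - (p1 - p2) \<bullet> (v1 - v2)"
    by (simp add: inner_diff_left inner_diff_right inner_commute algebra_simps)
  ultimately show ?thesis by (simp add: power2_norm_eq_inner)
qed

lemma div_cancel_aux:
  fixes x y w g :: real
  assumes "g \<noteq> 0"
  shows "(x / g) / (y * (w / g)) = x / (y * w)"
  using assms by (cases "y = 0 \<or> w = 0") (auto simp: field_simps)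

lemma one_minus_div_mult:
  fixes a q :: real
  assumes "q \<noteq> 0"
  shows "(1 - a / q) * q = q - a"
  using assms by (simp add: field_simps)

lemma k1_aux:
  fixes g q :: real
  assumes "g \<noteq> 0" "q \<noteq> 0"
  shows "1 / (g * q\<^sup>2) * (g * q)\<^sup>2 = g"
  using assms by (simp add: power2_eq_square field_simps)

lemma k2_aux:
  fixes g q D :: real
  assumes "g \<noteq> 0" "q \<noteq> 0"
  shows "q * D / (g\<^sup>2 * q^4) * (g * q)\<^sup>2 = D / q"
  using assms by (simp add: power2_eq_square power4_eq_xxxx field_simps)

lemma main_id_aux:
  fixes q \<omega> \<gamma> \<mu> D \<tau> Zg zb B A ab :: real
  assumes q: "q \<noteq> 0" and w: "\<omega> = q - 1" and t: "\<tau> = \<gamma> * q" and D: "D = \<gamma> * q + 2 * \<mu>"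
  shows "Zg - 2 * zb + \<gamma> * B + D * (\<omega>\<^sup>2 * A + 2 * \<omega> * ab + B) / q
          + \<omega> * (\<gamma> + D / q) * (B - 2 * ab + A)
        = Zg + (q * D - (\<gamma> + 2 * \<mu>)) * A - 2 * (zb + \<gamma> * \<omega> * ab - (\<tau> + \<mu>) * B)"
  using q unfolding w t D by (simp add: field_simps power2_eq_square)

lemma alg_real:
  fixes \<gamma> \<omega> \<mu> Z zb B A ab :: real
  assumes g: "\<gamma> > 0" and w: "\<omega> \<ge> 0" and m: "\<mu> \<ge> 0"
  defines "\<tau> \<equiv> \<gamma> * (1 + \<omega>)"
  defines "C \<equiv> (1 + \<omega>) * (\<gamma> * (1 + \<omega>) + 2 * \<mu>)"
  defines "K \<equiv> 1 / (\<gamma> * (1 + \<omega>)\<^sup>2) + C / (\<gamma>\<^sup>2 * (1 + \<omega>)^4)"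
  defines "c3 \<equiv> 1 - (1 + 2 / \<gamma> * \<mu>) / ((1 + \<omega>) * (1 + \<omega> + 2 / \<gamma> * \<mu>))"
  shows "Z / \<gamma> - 2 * zb + \<gamma> * B + C * (\<omega>\<^sup>2 * A + 2 * \<omega> * ab + B) / (1 + \<omega>)\<^sup>2
          + K * \<omega> * \<tau>\<^sup>2 * (B - 2 * ab + A)
        = Z / \<gamma> + c3 * C * A - 2 * (zb + \<gamma> * \<omega> * ab - (\<tau> + \<mu>) * B)"
proof -
  have p1: "1 + \<omega> > 0" using w by simp
  have p2: "1 + \<omega> + 2 / \<gamma> * \<mu> > 0" using w m g by (simp add: add_pos_nonneg)
  have p3: "\<gamma> + \<gamma> * \<omega> + 2 * \<mu> > 0" using w m g by (simp add: add_pos_nonneg)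
  have e: "1 + \<omega> + 2 / \<gamma> * \<mu> = (\<gamma> + \<gamma> * \<omega> + 2 * \<mu>) / \<gamma>" using g by (simp add: field_simps)
  have e2: "1 + 2 / \<gamma> * \<mu> = (\<gamma> + 2 * \<mu>) / \<gamma>" using g by (simp add: field_simps)
  have c3': "c3 = 1 - (\<gamma> + 2 * \<mu>) / ((1 + \<omega>) * (\<gamma> + \<gamma> * \<omega> + 2 * \<mu>))"
    unfolding c3_def e e2 using g by (simp add: div_cancel_aux)
  define D where "D = \<gamma> + \<gamma> * \<omega> + 2 * \<mu>"
  have CD: "C = (1 + \<omega>) * D" unfolding C_def D_def by (simp add: algebra_simps)
  have nz: "(1 + \<omega>) * D \<noteq> 0" using p1 p3 by (simp add: D_def)
  have c3C: "c3 * C = C - (\<gamma> + 2 * \<mu>)" unfolding c3' CD D_def[symmetric]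
    by (rule one_minus_div_mult[OF nz])
  have k1: "1 / (\<gamma> * (1 + \<omega>)\<^sup>2) * (\<gamma> * (1 + \<omega>))\<^sup>2 = \<gamma>"
    using g p1 by (intro k1_aux) auto
  have k2: "(1 + \<omega>) * D / (\<gamma>\<^sup>2 * (1 + \<omega>)^4) * (\<gamma> * (1 + \<omega>))\<^sup>2 = D / (1 + \<omega>)"
    using g p1 by (intro k2_aux) auto
  have Kt: "K * \<omega> * \<tau>\<^sup>2 = \<omega> * (\<gamma> + D / (1 + \<omega>))"
  proof -
    have "K * \<tau>\<^sup>2 = 1 / (\<gamma> * (1 + \<omega>)\<^sup>2) * (\<gamma> * (1 + \<omega>))\<^sup>2 + (1 + \<omega>) * D / (\<gamma>\<^sup>2 * (1 + \<omega>)^4) * (\<gamma> * (1 + \<omega>))\<^sup>2"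
      unfolding K_def CD \<tau>_def by (rule distrib_right)
    also have "\<dots> = \<gamma> + D / (1 + \<omega>)" by (simp only: k1 k2)
    finally have "K * \<tau>\<^sup>2 = \<gamma> + D / (1 + \<omega>)" .
    then show ?thesis by (simp add: mult.commute mult.left_commute)
  qed
  have CX: "C * X / (1 + \<omega>)\<^sup>2 = D * X / (1 + \<omega>)" for X
    unfolding CD using p1 by (simp add: power2_eq_square)
  have "Z / \<gamma> - 2 * zb + \<gamma> * B + D * (\<omega>\<^sup>2 * A + 2 * \<omega> * ab + B) / (1 + \<omega>)
          + \<omega> * (\<gamma> + D / (1 + \<omega>)) * (B - 2 * ab + A)
        = Z / \<gamma> + ((1 + \<omega>) * D - (\<gamma> + 2 * \<mu>)) * A - 2 * (zb + \<gamma> * \<omega> * ab - (\<tau> + \<mu>) * B)"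
    using p1 by (intro main_id_aux[where q = "1 + \<omega>"]) (auto simp: \<tau>_def D_def algebra_simps)
  then show ?thesis
    unfolding CX Kt c3C by (simp only: CD)
qed

lemma vec_main:
  fixes z a b :: "'a::real_inner" and \<gamma> \<omega> \<mu> :: real
  assumes g: "\<gamma> > 0" and w: "\<omega> \<ge> 0" and m: "\<mu> \<ge> 0"
    and mono: "\<mu> * norm b ^ 2 \<le> (z + (\<gamma> * \<omega>) *\<^sub>R a - (\<gamma> * (1 + \<omega>)) *\<^sub>R b) \<bullet> b"
  defines "C \<equiv> (1 + \<omega>) * (\<gamma> * (1 + \<omega>) + 2 * \<mu>)"
  defines "K \<equiv> 1 / (\<gamma> * (1 + \<omega>)\<^sup>2) + C / (\<gamma>\<^sup>2 * (1 + \<omega>)^4)"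
  defines "c3 \<equiv> 1 - (1 + 2 / \<gamma> * \<mu>) / ((1 + \<omega>) * (1 + \<omega> + 2 / \<gamma> * \<mu>))"
  shows "(1 / \<gamma>) * norm (z - \<gamma> *\<^sub>R b) ^ 2 + C * norm ((1 / (1 + \<omega>)) *\<^sub>R (\<omega> *\<^sub>R a + b)) ^ 2
          + K * \<omega> * norm ((\<gamma> * (1 + \<omega>)) *\<^sub>R (b - a)) ^ 2
        \<le> (1 / \<gamma>) * norm z ^ 2 + c3 * C * norm a ^ 2"
proof -
  define Z where "Z = norm z ^ 2"
  define A where "A = norm a ^ 2"
  define B where "B = norm b ^ 2"
  define zb where "zb = z \<bullet> b"
  define ab where "ab = a \<bullet> b"
  have p1: "1 + \<omega> > 0" using w by simp
  have n1: "norm (z - \<gamma> *\<^sub>R b) ^ 2 = Z - 2 * \<gamma> * zb + \<gamma>\<^sup>2 * B"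
    using norm_add_scale_sq[of z "- \<gamma>" b] unfolding Z_def B_def zb_def by simp
  have n2: "norm ((1 / (1 + \<omega>)) *\<^sub>R (\<omega> *\<^sub>R a + b)) ^ 2 = (\<omega>\<^sup>2 * A + 2 * \<omega> * ab + B) / (1 + \<omega>)\<^sup>2"
  proof -
    have "norm (\<omega> *\<^sub>R a + b) ^ 2 = \<omega>\<^sup>2 * A + 2 * \<omega> * ab + B"
      using norm_add_scale_sq[of b \<omega> a] unfolding A_def B_def ab_def by (simp add: inner_commute add.commute)
    then show ?thesis by (simp add: power_mult_distrib power_divide)
  qed
  have n3: "norm ((\<gamma> * (1 + \<omega>)) *\<^sub>R (b - a)) ^ 2 = (\<gamma> * (1 + \<omega>))\<^sup>2 * (B - 2 * ab + A)"
  proof -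
    have "norm (b - a) ^ 2 = B - 2 * ab + A"
      using norm_add_scale_sq[of b "- 1" a] unfolding A_def B_def ab_def by (simp add: inner_commute)
    then show ?thesis by (simp add: power_mult_distrib)
  qed
  have mono': "\<mu> * B \<le> zb + \<gamma> * \<omega> * ab - \<gamma> * (1 + \<omega>) * B"
  proof -
    have "(z + (\<gamma> * \<omega>) *\<^sub>R a - (\<gamma> * (1 + \<omega>)) *\<^sub>R b) \<bullet> b = z \<bullet> b + \<gamma> * \<omega> * (a \<bullet> b) - \<gamma> * (1 + \<omega>) * (b \<bullet> b)"
      by (simp only: inner_add_left inner_diff_left inner_scaleR_left)
    then show ?thesis using mono unfolding B_def zb_def ab_def by (simp only: power2_norm_eq_inner)
  qed
  have id: "Z / \<gamma> - 2 * zb + \<gamma> * B + C * (\<omega>\<^sup>2 * A + 2 * \<omega> * ab + B) / (1 + \<omega>)\<^sup>2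
          + K * \<omega> * (\<gamma> * (1 + \<omega>))\<^sup>2 * (B - 2 * ab + A)
        = Z / \<gamma> + c3 * C * A - 2 * (zb + \<gamma> * \<omega> * ab - (\<gamma> * (1 + \<omega>) + \<mu>) * B)"
    unfolding C_def K_def c3_def by (rule alg_real[OF g w m])
  have "(1 / \<gamma>) * (Z - 2 * \<gamma> * zb + \<gamma>\<^sup>2 * B) = Z / \<gamma> - 2 * zb + \<gamma> * B"
    using g by (simp add: field_simps power2_eq_square)
  then have L: "(1 / \<gamma>) * norm (z - \<gamma> *\<^sub>R b) ^ 2 + C * norm ((1 / (1 + \<omega>)) *\<^sub>R (\<omega> *\<^sub>R a + b)) ^ 2
          + K * \<omega> * norm ((\<gamma> * (1 + \<omega>)) *\<^sub>R (b - a)) ^ 2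
     = Z / \<gamma> - 2 * zb + \<gamma> * B + C * (\<omega>\<^sup>2 * A + 2 * \<omega> * ab + B) / (1 + \<omega>)\<^sup>2
          + K * \<omega> * (\<gamma> * (1 + \<omega>))\<^sup>2 * (B - 2 * ab + A)"
    unfolding n1 n2 n3 by (simp only: times_divide_eq_right mult.assoc)
  have "(\<gamma> * (1 + \<omega>) + \<mu>) * B = \<gamma> * (1 + \<omega>) * B + \<mu> * B" by (simp add: distrib_right)
  then have E: "0 \<le> zb + \<gamma> * \<omega> * ab - (\<gamma> * (1 + \<omega>) + \<mu>) * B" using mono' by linarith
  show ?thesis unfolding L id Z_def[symmetric] A_def[symmetric] using E by simp
qed

lemma vec_expand:
  fixes Ax Au e :: "'a::real_inner"
  shows "(1 / \<gamma>) * norm (Ax - s *\<^sub>R e) ^ 2 + C * norm (Au + t *\<^sub>R e) ^ 2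
       = (1 / \<gamma>) * norm Ax ^ 2 + C * norm Au ^ 2 + ((- (2 * s / \<gamma>)) *\<^sub>R Ax + (2 * C * t) *\<^sub>R Au) \<bullet> e
         + (s\<^sup>2 / \<gamma> + C * t\<^sup>2) * norm e ^ 2"
proof -
  have 1: "norm (Ax - s *\<^sub>R e) ^ 2 = norm Ax ^ 2 + 2 * (- s) * (Ax \<bullet> e) + (- s)\<^sup>2 * norm e ^ 2"
    using norm_add_scale_sq[of Ax "- s" e] by simp
  have 2: "norm (Au + t *\<^sub>R e) ^ 2 = norm Au ^ 2 + 2 * t * (Au \<bullet> e) + t\<^sup>2 * norm e ^ 2"
    by (rule norm_add_scale_sq)
  have 3: "((- (2 * s / \<gamma>)) *\<^sub>R Ax + (2 * C * t) *\<^sub>R Au) \<bullet> e = - (2 * s / \<gamma>) * (Ax \<bullet> e) + 2 * C * t * (Au \<bullet> e)"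
    by (simp only: inner_add_left inner_scaleR_left)
  show ?thesis unfolding 1 2 3 by (simp add: algebra_simps add_divide_distrib diff_divide_distrib)
qed

lemma norm_sum_sq_le:
  fixes X Y :: "'a::real_normed_vector"
  shows "norm (X + Y) ^ 2 \<le> 2 * norm X ^ 2 + 2 * norm Y ^ 2"
proof -
  have "norm (X + Y) ^ 2 \<le> (norm X + norm Y) ^ 2"
    by (simp add: norm_triangle_ineq power_mono)
  also have "\<dots> = 2 * norm X ^ 2 + 2 * norm Y ^ 2 - (norm X - norm Y) ^ 2"
    by (simp add: power2_eq_square algebra_simps)
  also have "\<dots> \<le> 2 * norm X ^ 2 + 2 * norm Y ^ 2" by simp
  finally show ?thesis .
qed

lemma sq_lt1:
  fixes s :: real
  assumes "0 < s" "s < 2"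
  shows "(1 - s)\<^sup>2 < 1" "(s - 1)\<^sup>2 < 1"
proof -
  have "(1 - s)\<^sup>2 = 1 - s * (2 - s)" by (simp add: power2_eq_square algebra_simps)
  moreover have "s * (2 - s) > 0" using assms by simp
  ultimately show "(1 - s)\<^sup>2 < 1" by simp
  then show "(s - 1)\<^sup>2 < 1" by (simp add: power2_commute)
qed

locale rpfb_setting =
  fixes f :: "'a::euclidean_space \<Rightarrow> real" and gradf :: "'a \<Rightarrow> 'a"
    and h :: "'a \<Rightarrow> ereal"
    and Lf \<mu>f \<mu>h \<gamma> \<omega> :: real and xs :: 'a
  assumes f_grad: "\<And>z. (f has_derivative (\<lambda>v. gradf z \<bullet> v)) (at z)"
    and Lf_pos: "Lf > 0"
    and f_smooth: "Lf-lipschitz_on UNIV gradf"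
    and f_strong: "convex_on UNIV (\<lambda>z. f z - \<mu>f / 2 * norm z ^ 2)"
    and muf_pos: "\<mu>f > 0"
    and h_proper: "ext_proper h" and h_closed: "ext_closed h" and h_convex: "ext_convex h"
    and muh: "\<mu>h \<ge> 0" and hstar_strong: "ext_strongly_convex \<mu>h (conjugate h)"
    and xs_opt: "- gradf xs \<in> subdiff h xs"
    and gamma_pos: "\<gamma> > 0" and gamma_lt: "\<gamma> < 2 / Lf"
    and omega_nonneg: "\<omega> \<ge> 0"
begin

definition "us = - gradf xs"
definition "CC = (1 + \<omega>) * (\<gamma> * (1 + \<omega>) + 2 * \<mu>h)"
definition "KK = 1 / (\<gamma> * (1 + \<omega>)\<^sup>2) + CC / (\<gamma>\<^sup>2 * (1 + \<omega>)^4)"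
definition "cc = max (max ((1 - \<gamma> * \<mu>f)\<^sup>2) ((\<gamma> * Lf - 1)\<^sup>2))
                   (1 - (1 + 2 / \<gamma> * \<mu>h) / ((1 + \<omega>) * (1 + \<omega> + 2 / \<gamma> * \<mu>h)))"
definition "Psi xt ut = (1 / \<gamma>) * norm (xt - xs) ^ 2 + (1 + \<omega>) * (\<gamma> * (1 + \<omega>) + 2 * \<mu>h) * norm (ut - us) ^ 2"
definition "Rf x u = rpfb_r \<gamma> \<omega> h gradf x u"
definition "xr x u = rpfb_xhat \<gamma> gradf x u - (1 / (1 + \<omega>)) *\<^sub>R Rf x u"
definition "ur x u = u + (1 / (\<gamma> * (1 + \<omega>)\<^sup>2)) *\<^sub>R Rf x u"
definition "Gv x u = (- (2 * (1 / (1 + \<omega>)) / \<gamma>)) *\<^sub>R (xr x u - xs) + (2 * CC * (1 / (\<gamma> * (1 + \<omega>)\<^sup>2))) *\<^sub>R (ur x u - us)"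

lemma CC_pos: "CC > 0"
  unfolding CC_def using gamma_pos omega_nonneg muh by (intro mult_pos_pos add_pos_nonneg) auto

lemma KK_nonneg: "KK \<ge> 0"
  unfolding KK_def using gamma_pos omega_nonneg CC_pos by (intro add_nonneg_nonneg divide_nonneg_pos) auto

lemma Psi_nonneg: "Psi x u \<ge> 0"
  unfolding Psi_def CC_def[symmetric] using gamma_pos CC_pos by (intro add_nonneg_nonneg mult_nonneg_nonneg) auto

lemma Psi_CC: "Psi x u = (1 / \<gamma>) * norm (x - xs) ^ 2 + CC * norm (u - us) ^ 2"
  unfolding Psi_def CC_def ..

lemma cc_bounds: "0 \<le> cc" "cc < 1"
proof -
  have mL: "\<mu>f \<le> Lf" using f_facts(1)[OF f_grad f_smooth f_strong gamma_pos] .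
  have gL: "\<gamma> * Lf < 2" using gamma_lt Lf_pos by (simp add: field_simps)
  have le: "\<gamma> * \<mu>f \<le> \<gamma> * Lf" using mL gamma_pos by (simp add: mult_left_mono)
  have gm: "0 < \<gamma> * \<mu>f" "\<gamma> * \<mu>f < 2"
    using gamma_pos muf_pos apply simp using le gL by linarith
  have 1: "(1 - \<gamma> * \<mu>f)\<^sup>2 < 1" using sq_lt1[OF gm] by simp
  have g0: "0 < \<gamma> * Lf" using gamma_pos Lf_pos by simp
  have 2: "(\<gamma> * Lf - 1)\<^sup>2 < 1" using sq_lt1[OF g0 gL] by simp
  have d: "0 < (1 + \<omega>) * (1 + \<omega> + 2 / \<gamma> * \<mu>h)" using omega_nonneg gamma_pos muh
    by (intro mult_pos_pos add_pos_nonneg) auto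
  have n: "0 < 1 + 2 / \<gamma> * \<mu>h" using gamma_pos muh by (intro add_pos_nonneg) auto
  have 3: "1 - (1 + 2 / \<gamma> * \<mu>h) / ((1 + \<omega>) * (1 + \<omega> + 2 / \<gamma> * \<mu>h)) < 1"
    using d n by simp
  show "cc < 1" unfolding cc_def using 1 2 3 by simp
  have "0 \<le> (1 - \<gamma> * \<mu>f)\<^sup>2" by simp
  then show "0 \<le> cc" unfolding cc_def by (meson max.coboundedI1 order_trans)
qed

lemma KK_alt: "KK = (1 / (1 + \<omega>))\<^sup>2 / \<gamma> + CC * (1 / (\<gamma> * (1 + \<omega>)\<^sup>2))\<^sup>2"
proof -
  have a: "(1 / (1 + \<omega>))\<^sup>2 / \<gamma> = 1 / (\<gamma> * (1 + \<omega>)\<^sup>2)"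
    by (simp add: power_divide mult.commute)
  have b: "CC * (1 / (\<gamma> * (1 + \<omega>)\<^sup>2))\<^sup>2 = CC / (\<gamma>\<^sup>2 * (1 + \<omega>)^4)"
    by (simp add: power_divide power_mult_distrib flip: power_mult)
  show ?thesis unfolding KK_def a b ..
qed

lemma Psi_update:
  "Psi (rpfb_xhat \<gamma> gradf x u - (1 / (1 + \<omega>)) *\<^sub>R dd) (u + (1 / (\<gamma> * (1 + \<omega>)\<^sup>2)) *\<^sub>R dd)
   = Psi (xr x u) (ur x u) + Gv x u \<bullet> (dd - Rf x u) + KK * norm (dd - Rf x u) ^ 2"
proof -
  have 1: "rpfb_xhat \<gamma> gradf x u - (1 / (1 + \<omega>)) *\<^sub>R dd - xs = (xr x u - xs) - (1 / (1 + \<omega>)) *\<^sub>R (dd - Rf x u)"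
    by (simp add: xr_def algebra_simps)
  have 2: "u + (1 / (\<gamma> * (1 + \<omega>)\<^sup>2)) *\<^sub>R dd - us = (ur x u - us) + (1 / (\<gamma> * (1 + \<omega>)\<^sup>2)) *\<^sub>R (dd - Rf x u)"
    by (simp add: ur_def algebra_simps)
  show ?thesis unfolding Psi_CC 1 2 vec_expand KK_alt Gv_def by simp
qed

lemma main_det:
  "Psi (xr x u) (ur x u) + KK * \<omega> * norm (Rf x u) ^ 2 \<le> cc * Psi x u"
proof -
  define \<tau> where "\<tau> = \<gamma> * (1 + \<omega>)"
  have tp: "\<tau> > 0" unfolding \<tau>_def using gamma_pos omega_nonneg by simp
  define xh where "xh = rpfb_xhat \<gamma> gradf x u"
  define p where "p = prox \<tau> h (xh + \<tau> *\<^sub>R u)"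
  have R: "Rf x u = xh - p" unfolding Rf_def rpfb_r_def p_def xh_def \<tau>_def ..
  define v where "v = (1 / \<tau>) *\<^sub>R (xh + \<tau> *\<^sub>R u - p)"
  have vsub: "v \<in> subdiff h p"
    unfolding v_def p_def by (rule prox_subgrad[OF tp h_convex h_proper h_closed xs_opt])
  have ussub: "us \<in> subdiff h xs" unfolding us_def by (rule xs_opt)
  define z where "z = (x - \<gamma> *\<^sub>R gradf x) - (xs - \<gamma> *\<^sub>R gradf xs)"
  define a where "a = u - us"
  define b where "b = v - us"
  have tv: "\<tau> *\<^sub>R v = xh + \<tau> *\<^sub>R u - p" unfolding v_def using tp by simp
  have Rab: "Rf x u = \<tau> *\<^sub>R (b - a)"
  proof -
    have "\<tau> *\<^sub>R (b - a) = \<tau> *\<^sub>R v - \<tau> *\<^sub>R u" by (simp add: a_def b_def algebra_simps)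
    then show ?thesis using tv R by simp
  qed
  have xhx: "xh - xs = z - \<gamma> *\<^sub>R a"
    by (simp add: xh_def rpfb_xhat_def z_def a_def us_def algebra_simps)
  have g1: "(1 / (1 + \<omega>)) *\<^sub>R Rf x u = \<gamma> *\<^sub>R (b - a)"
    using omega_nonneg by (simp add: Rab \<tau>_def)
  have xr1: "xr x u - xs = z - \<gamma> *\<^sub>R b"
  proof -
    have "xr x u - xs = (xh - xs) - (1 / (1 + \<omega>)) *\<^sub>R Rf x u" by (simp add: xr_def xh_def)
    also have "\<dots> = z - \<gamma> *\<^sub>R b" unfolding xhx g1 by (simp add: algebra_simps)
    finally show ?thesis .
  qed
  have g2: "(1 / (\<gamma> * (1 + \<omega>)\<^sup>2)) *\<^sub>R Rf x u = (1 / (1 + \<omega>)) *\<^sub>R (b - a)"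
    using omega_nonneg gamma_pos by (simp add: Rab \<tau>_def power2_eq_square)
  have ur1: "ur x u - us = (1 / (1 + \<omega>)) *\<^sub>R (\<omega> *\<^sub>R a + b)"
  proof -
    have "ur x u - us = a + (1 / (1 + \<omega>)) *\<^sub>R (b - a)" by (simp add: ur_def a_def g2)
    also have "\<dots> = (1 / (1 + \<omega>)) *\<^sub>R ((1 + \<omega>) *\<^sub>R a + (b - a))"
      using omega_nonneg by (simp add: scaleR_add_right)
    also have "(1 + \<omega>) *\<^sub>R a + (b - a) = \<omega> *\<^sub>R a + b" by (simp add: algebra_simps)
    finally show ?thesis .
  qed
  have px: "p - xs = z + (\<gamma> * \<omega>) *\<^sub>R a - (\<gamma> * (1 + \<omega>)) *\<^sub>R b"
  proof -
    have "p - xs = (xh - xs) - Rf x u" using R by simp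
    also have "\<dots> = z - \<gamma> *\<^sub>R a - \<tau> *\<^sub>R (b - a)" unfolding xhx Rab ..
    also have "\<dots> = z + (\<gamma> * \<omega>) *\<^sub>R a - (\<gamma> * (1 + \<omega>)) *\<^sub>R b"
      by (simp add: \<tau>_def algebra_simps)
    finally show ?thesis .
  qed
  have mono: "\<mu>h * norm b ^ 2 \<le> (z + (\<gamma> * \<omega>) *\<^sub>R a - (\<gamma> * (1 + \<omega>)) *\<^sub>R b) \<bullet> b"
    using hstar_mono[OF hstar_strong h_proper vsub ussub] unfolding px b_def .
  have V: "(1 / \<gamma>) * norm (z - \<gamma> *\<^sub>R b) ^ 2 + CC * norm ((1 / (1 + \<omega>)) *\<^sub>R (\<omega> *\<^sub>R a + b)) ^ 2
          + KK * \<omega> * norm ((\<gamma> * (1 + \<omega>)) *\<^sub>R (b - a)) ^ 2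
        \<le> (1 / \<gamma>) * norm z ^ 2 + (1 - (1 + 2 / \<gamma> * \<mu>h) / ((1 + \<omega>) * (1 + \<omega> + 2 / \<gamma> * \<mu>h))) * CC * norm a ^ 2"
    unfolding KK_def CC_def by (rule vec_main[OF gamma_pos omega_nonneg muh mono])
  have zb: "norm z ^ 2 \<le> max ((1 - \<gamma> * \<mu>f)\<^sup>2) ((\<gamma> * Lf - 1)\<^sup>2) * norm (x - xs) ^ 2"
    unfolding z_def by (rule f_facts(2)[OF f_grad f_smooth f_strong gamma_pos])
  have "Psi (xr x u) (ur x u) + KK * \<omega> * norm (Rf x u) ^ 2
      = (1 / \<gamma>) * norm (z - \<gamma> *\<^sub>R b) ^ 2 + CC * norm ((1 / (1 + \<omega>)) *\<^sub>R (\<omega> *\<^sub>R a + b)) ^ 2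
          + KK * \<omega> * norm ((\<gamma> * (1 + \<omega>)) *\<^sub>R (b - a)) ^ 2"
    unfolding Psi_CC xr1 ur1 Rab \<tau>_def ..
  also have "\<dots> \<le> (1 / \<gamma>) * norm z ^ 2 + (1 - (1 + 2 / \<gamma> * \<mu>h) / ((1 + \<omega>) * (1 + \<omega> + 2 / \<gamma> * \<mu>h))) * CC * norm a ^ 2"
    by (rule V)
  also have "\<dots> \<le> cc * ((1 / \<gamma>) * norm (x - xs) ^ 2) + cc * (CC * norm a ^ 2)"
  proof (rule add_mono)
    have "(1 / \<gamma>) * norm z ^ 2 \<le> (1 / \<gamma>) * (max ((1 - \<gamma> * \<mu>f)\<^sup>2) ((\<gamma> * Lf - 1)\<^sup>2) * norm (x - xs) ^ 2)"
      using zb gamma_pos by (intro mult_left_mono) auto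
    also have "\<dots> \<le> (1 / \<gamma>) * (cc * norm (x - xs) ^ 2)"
      using gamma_pos unfolding cc_def by (intro mult_left_mono mult_right_mono) auto
    finally show "(1 / \<gamma>) * norm z ^ 2 \<le> cc * ((1 / \<gamma>) * norm (x - xs) ^ 2)" by (simp add: algebra_simps)
    have "0 \<le> CC * norm a ^ 2" using CC_pos by simp
    then show "(1 - (1 + 2 / \<gamma> * \<mu>h) / ((1 + \<omega>) * (1 + \<omega> + 2 / \<gamma> * \<mu>h))) * CC * norm a ^ 2 \<le> cc * (CC * norm a ^ 2)"
      unfolding cc_def mult.assoc by (intro mult_right_mono) auto
  qed
  also have "\<dots> = cc * Psi x u" unfolding Psi_CC a_def by (simp add: distrib_left)
  finally show ?thesis .
qed

lemma Psi_r_le: "Psi (xr x u) (ur x u) \<le> Psi x u"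
proof -
  have "0 \<le> KK * \<omega> * norm (Rf x u) ^ 2" using KK_nonneg omega_nonneg by simp
  moreover have "cc * Psi x u \<le> 1 * Psi x u" using cc_bounds Psi_nonneg[of x u]
    by (intro mult_right_mono) auto
  ultimately show ?thesis using main_det[of x u] by linarith
qed

definition "kap1 = 4 * (\<gamma> * (1 + \<omega>)\<^sup>2)\<^sup>2 / CC"
definition "kap2 = 2 * (- (2 * (1 / (1 + \<omega>)) / \<gamma>))\<^sup>2 * \<gamma> + 2 * (2 * CC * (1 / (\<gamma> * (1 + \<omega>)\<^sup>2)))\<^sup>2 / CC"

lemma R_bound: "norm (Rf x u) ^ 2 \<le> kap1 * Psi x u"
proof -
  define k where "k = \<gamma> * (1 + \<omega>)\<^sup>2"
  have kp: "k > 0" unfolding k_def using gamma_pos omega_nonneg by simp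
  have "ur x u - us - (u - us) = (1 / k) *\<^sub>R Rf x u" by (simp add: ur_def k_def)
  then have Re: "Rf x u = k *\<^sub>R ((ur x u - us) + (- (u - us)))" using kp by simp
  have Y: "CC * norm (ur x u - us) ^ 2 \<le> Psi x u"
    using Psi_r_le[of x u] gamma_pos unfolding Psi_CC[of "xr x u"] by (smt (verit) divide_nonneg_pos zero_le_power2 mult_nonneg_nonneg zero_less_one less_imp_le)
  have W: "CC * norm (u - us) ^ 2 \<le> Psi x u"
    using gamma_pos unfolding Psi_CC by (smt (verit) divide_nonneg_pos zero_le_power2 mult_nonneg_nonneg zero_less_one less_imp_le)
  have W': "CC * norm (- (u - us)) ^ 2 \<le> Psi x u" using W by (simp only: norm_minus_cancel)
  have "norm (Rf x u) ^ 2 = k\<^sup>2 * norm ((ur x u - us) + (- (u - us))) ^ 2"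
    unfolding Re using kp by (simp add: power_mult_distrib)
  also have "\<dots> \<le> k\<^sup>2 * (2 * norm (ur x u - us) ^ 2 + 2 * norm (- (u - us)) ^ 2)"
    by (intro mult_left_mono norm_sum_sq_le) simp
  also have "\<dots> \<le> k\<^sup>2 * (2 * (Psi x u / CC) + 2 * (Psi x u / CC))"
    using Y W' CC_pos by (intro mult_left_mono add_mono) (auto simp: pos_le_divide_eq mult.commute)
  also have "\<dots> = kap1 * Psi x u" unfolding kap1_def k_def by (simp add: field_simps)
  finally show ?thesis .
qed

lemma Gv_bound: "norm (Gv x u) ^ 2 \<le> kap2 * Psi x u"
proof -
  define \<alpha> where "\<alpha> = - (2 * (1 / (1 + \<omega>)) / \<gamma>)"
  define \<beta> where "\<beta> = 2 * CC * (1 / (\<gamma> * (1 + \<omega>)\<^sup>2))"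
  have X: "norm (xr x u - xs) ^ 2 \<le> \<gamma> * Psi x u"
  proof -
    have "(1 / \<gamma>) * norm (xr x u - xs) ^ 2 \<le> Psi x u"
      using Psi_r_le[of x u] CC_pos unfolding Psi_CC[of "xr x u"] by (smt (verit) zero_le_power2 mult_nonneg_nonneg)
    then show ?thesis using gamma_pos by (simp add: field_simps)
  qed
  have Y: "norm (ur x u - us) ^ 2 \<le> Psi x u / CC"
  proof -
    have "CC * norm (ur x u - us) ^ 2 \<le> Psi x u"
      using Psi_r_le[of x u] gamma_pos unfolding Psi_CC[of "xr x u"] by (smt (verit) divide_nonneg_pos zero_le_power2 mult_nonneg_nonneg zero_less_one less_imp_le)
    then show ?thesis using CC_pos by (simp add: pos_le_divide_eq mult.commute)
  qed
  have "norm (Gv x u) ^ 2 = norm (\<alpha> *\<^sub>R (xr x u - xs) + \<beta> *\<^sub>R (ur x u - us)) ^ 2"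
    unfolding Gv_def \<alpha>_def \<beta>_def ..
  also have "\<dots> \<le> 2 * norm (\<alpha> *\<^sub>R (xr x u - xs)) ^ 2 + 2 * norm (\<beta> *\<^sub>R (ur x u - us)) ^ 2"
    by (rule norm_sum_sq_le)
  also have "\<dots> = 2 * \<alpha>\<^sup>2 * norm (xr x u - xs) ^ 2 + 2 * \<beta>\<^sup>2 * norm (ur x u - us) ^ 2"
    by (simp add: power_mult_distrib)
  also have "\<dots> \<le> 2 * \<alpha>\<^sup>2 * (\<gamma> * Psi x u) + 2 * \<beta>\<^sup>2 * (Psi x u / CC)"
    using X Y by (intro add_mono mult_left_mono) auto
  also have "\<dots> = kap2 * Psi x u" unfolding kap2_def \<alpha>_def[symmetric] \<beta>_def[symmetric]
    by (simp add: algebra_simps)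
  finally show ?thesis .
qed

lemma gradf_cont [continuous_intros]: "continuous_on S g \<Longrightarrow> continuous_on S (\<lambda>p. gradf (g p))"
  using continuous_on_compose2[OF lipschitz_on_continuous_on[OF f_smooth]] by blast

lemma prox_cont [continuous_intros]:
  assumes "continuous_on S g"
  shows "continuous_on S (\<lambda>p. prox (\<gamma> * (1 + \<omega>)) h (g p))"
proof -
  have tp: "\<gamma> * (1 + \<omega>) > 0" using gamma_pos omega_nonneg by simp
  have "1-lipschitz_on UNIV (prox (\<gamma> * (1 + \<omega>)) h)"
    by (rule lipschitz_onI) (auto simp: dist_norm intro: prox_nonexp[OF tp h_convex h_proper h_closed xs_opt])
  then show ?thesis using continuous_on_compose2[OF lipschitz_on_continuous_on assms] by blast
qed

lemma cont_xhat: "continuous_on UNIV (\<lambda>p. rpfb_xhat \<gamma> gradf (fst p) (snd p))"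
  unfolding rpfb_xhat_def by (intro continuous_intros)

lemma cont_R: "continuous_on UNIV (\<lambda>p. Rf (fst p) (snd p))"
  unfolding Rf_def rpfb_r_def rpfb_xhat_def by (intro continuous_intros)

lemma cont_Psi: "continuous_on UNIV (\<lambda>p. Psi (fst p) (snd p))"
  unfolding Psi_def by (intro continuous_intros)

lemma cont_Psir: "continuous_on UNIV (\<lambda>p. Psi (xr (fst p) (snd p)) (ur (fst p) (snd p)))"
  unfolding Psi_def xr_def ur_def Rf_def rpfb_r_def rpfb_xhat_def by (intro continuous_intros)

lemma cont_Gv: "continuous_on UNIV (\<lambda>p. Gv (fst p) (snd p))"
  unfolding Gv_def xr_def ur_def Rf_def rpfb_r_def rpfb_xhat_def by (intro continuous_intros)

end

lemma hist_props:
  fixes M :: "'w measure" and x u :: "nat \<Rightarrow> 'w \<Rightarrow> 'a::topological_space"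
  assumes meas: "\<And>i. (\<lambda>s. (x i s, u i s)) \<in> measurable M borel"
  shows "subalgebra M (hist_algebra M x u t)"
    and "(\<lambda>s. (x t s, u t s)) \<in> measurable (hist_algebra M x u t) borel"
proof -
  define G where "G = (\<Union>i\<le>t. {(\<lambda>s. (x i s, u i s)) -` A \<inter> space M | A. A \<in> sets borel})"
  have GM: "G \<subseteq> sets M" unfolding G_def using measurable_sets[OF meas] by blast
  then have GP: "G \<subseteq> Pow (space M)" using sets.sets_into_space by blast
  have H: "hist_algebra M x u t = sigma (space M) G" unfolding hist_algebra_def G_def ..
  have sp: "space (hist_algebra M x u t) = space M" unfolding H by (rule space_measure_of_conv)
  have st: "sets (hist_algebra M x u t) = sigma_sets (space M) G" unfolding H by (rule sets_measure_of[OF GP])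
  show "subalgebra M (hist_algebra M x u t)"
    unfolding subalgebra_def sp st using sets.sigma_sets_subset[OF GM] by simp
  show "(\<lambda>s. (x t s, u t s)) \<in> measurable (hist_algebra M x u t) borel"
  proof (rule measurableI)
    fix A :: "('a \<times> 'a) set" assume A: "A \<in> sets borel"
    have "(\<lambda>s. (x t s, u t s)) -` A \<inter> space M \<in> G" unfolding G_def using A by blast
    then show "(\<lambda>s. (x t s, u t s)) -` A \<inter> space (hist_algebra M x u t) \<in> sets (hist_algebra M x u t)"
      unfolding sp st by (rule sigma_sets.Basic)
  qed simp
qed

lemma meas_cont_comp:
  fixes \<phi> :: "'a::topological_space \<Rightarrow> 'b::topological_space"
  assumes "continuous_on UNIV \<phi>" "X \<in> measurable N borel"
  shows "(\<lambda>s. \<phi> (X s)) \<in> borel_measurable N"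
  using measurable_compose[OF assms(2) borel_measurable_continuous_onI[OF assms(1)]] by (simp add: o_def)

lemma prod_le_sq:
  fixes a' b' c :: "'b::euclidean_space"
  assumes "c \<in> Basis"
  shows "norm ((a' \<bullet> c) * (b' \<bullet> c)) \<le> norm (norm a' ^ 2 + norm b' ^ 2)"
proof -
  have "\<bar>a' \<bullet> c\<bar> \<le> norm a'" "\<bar>b' \<bullet> c\<bar> \<le> norm b'" using Basis_le_norm[OF assms] by auto
  then have "\<bar>(a' \<bullet> c) * (b' \<bullet> c)\<bar> \<le> norm a' * norm b'"
    by (simp add: abs_mult mult_mono)
  also have "\<dots> \<le> norm a' ^ 2 + norm b' ^ 2"
  proof -
    have "0 \<le> norm a' * norm b'" by simp
    moreover have "2 * (norm a' * norm b') \<le> norm a' ^ 2 + norm b' ^ 2"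
      using sum_squares_bound[of "norm a'" "norm b'"] by (simp add: power2_eq_square mult.assoc)
    ultimately show ?thesis by linarith
  qed
  finally show ?thesis by simp
qed

context rpfb_setting
begin

lemma prob_step:
  fixes M :: "'w measure" and x u d :: "nat \<Rightarrow> 'w \<Rightarrow> 'a" and t :: nat
  assumes M: "prob_space M"
    and meas: "\<And>i. (\<lambda>s. (x i s, u i s)) \<in> measurable M borel"
    and step_u: "\<And>s. s \<in> space M \<Longrightarrow> u (Suc t) s = u t s + (1 / (\<gamma> * (1 + \<omega>)\<^sup>2)) *\<^sub>R d t s"
    and step_x: "\<And>s. s \<in> space M \<Longrightarrow> x (Suc t) s = rpfb_xhat \<gamma> gradf (x t s) (u t s) - (1 / (1 + \<omega>)) *\<^sub>R d t s"
    and d_meas: "d t \<in> borel_measurable M"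
    and unbiased: "\<And>b. b \<in> Basis \<Longrightarrow>
        AE s in M. real_cond_exp M (hist_algebra M x u t) (\<lambda>s. d t s \<bullet> b) s
                    = rpfb_r \<gamma> \<omega> h gradf (x t s) (u t s) \<bullet> b"
    and variance: "AE s in M. nn_cond_exp M (hist_algebra M x u t)
                     (\<lambda>s. ennreal (norm (d t s - rpfb_r \<gamma> \<omega> h gradf (x t s) (u t s)) ^ 2)) s
                   \<le> ennreal (\<omega> * norm (rpfb_r \<gamma> \<omega> h gradf (x t s) (u t s)) ^ 2)"
    and intY: "integrable M (\<lambda>s. Psi (x t s) (u t s))"
  shows "integrable M (\<lambda>s. Psi (x (Suc t) s) (u (Suc t) s))"
    and "(\<integral>s. Psi (x (Suc t) s) (u (Suc t) s) \<partial>M) \<le> cc * (\<integral>s. Psi (x t s) (u t s) \<partial>M)"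
proof -
  interpret prob_space M by (rule M)
  define F where "F = hist_algebra M x u t"
  have sub: "subalgebra M F" unfolding F_def by (rule hist_props(1)[OF meas])
  have XF: "(\<lambda>s. (x t s, u t s)) \<in> measurable F borel" unfolding F_def by (rule hist_props(2)[OF meas])
  interpret fms: finite_measure_subalgebra M F by unfold_locales (rule sub)
  define Y where "Y s = Psi (x t s) (u t s)" for s
  define R where "R s = Rf (x t s) (u t s)" for s
  define Pr where "Pr s = Psi (xr (x t s) (u t s)) (ur (x t s) (u t s))" for s
  define G where "G s = Gv (x t s) (u t s)" for s
  define E where "E s = d t s - R s" for s
  have mY: "Y \<in> borel_measurable M" unfolding Y_def using meas_cont_comp[OF cont_Psi meas] by simp
  have mR: "R \<in> borel_measurable M" unfolding R_def using meas_cont_comp[OF cont_R meas] by simp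
  have mPr: "Pr \<in> borel_measurable M" unfolding Pr_def using meas_cont_comp[OF cont_Psir meas] by simp
  have mG: "G \<in> borel_measurable M" unfolding G_def using meas_cont_comp[OF cont_Gv meas] by simp
  have mGF: "G \<in> borel_measurable F" unfolding G_def using meas_cont_comp[OF cont_Gv XF] by simp
  have mRF: "R \<in> borel_measurable F" unfolding R_def using meas_cont_comp[OF cont_R XF] by simp
  have mE: "E \<in> borel_measurable M" unfolding E_def using d_meas mR by measurable
  have Rdef: "rpfb_r \<gamma> \<omega> h gradf (x t s) (u t s) = R s" for s unfolding R_def Rf_def ..
  have iY: "integrable M Y" using intY unfolding Y_def .
  have Y0: "0 \<le> Y s" for s unfolding Y_def by (rule Psi_nonneg)
  have iR2: "integrable M (\<lambda>s. norm (R s) ^ 2)"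
  proof -
    have bnd1: "integrable M (\<lambda>s. kap1 * Y s)" using iY by simp
    have bnd2: "(\<lambda>s. norm (R s) ^ 2) \<in> borel_measurable M" using mR by measurable
    have bnd3: "AE s in M. norm (norm (R s) ^ 2) \<le> norm (kap1 * Y s)"
      using R_bound unfolding R_def Y_def by (auto intro: order_trans[OF _ abs_ge_self])
    show ?thesis by (rule Bochner_Integration.integrable_bound[OF bnd1 bnd2 bnd3])
  qed
  have iG2: "integrable M (\<lambda>s. norm (G s) ^ 2)"
  proof -
    have bnd1: "integrable M (\<lambda>s. kap2 * Y s)" using iY by simp
    have bnd2: "(\<lambda>s. norm (G s) ^ 2) \<in> borel_measurable M" using mG by measurable
    have bnd3: "AE s in M. norm (norm (G s) ^ 2) \<le> norm (kap2 * Y s)"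
      using Gv_bound unfolding G_def Y_def by (auto intro: order_trans[OF _ abs_ge_self])
    show ?thesis by (rule Bochner_Integration.integrable_bound[OF bnd1 bnd2 bnd3])
  qed
  have iPr: "integrable M Pr"
  proof (rule Bochner_Integration.integrable_bound[OF iY mPr])
    show "AE s in M. norm (Pr s) \<le> norm (Y s)"
      using Psi_r_le Psi_nonneg unfolding Pr_def Y_def by auto
  qed
  have iwR: "integrable M (\<lambda>s. \<omega> * norm (R s) ^ 2)" using iR2 by simp
  have nnE: "(\<integral>\<^sup>+ s. ennreal (norm (E s) ^ 2) \<partial>M) \<le> ennreal (\<integral>s. \<omega> * norm (R s) ^ 2 \<partial>M)"
  proof -
    have "(\<integral>\<^sup>+ s. ennreal (norm (E s) ^ 2) \<partial>M) = (\<integral>\<^sup>+ s. 1 * ennreal (norm (E s) ^ 2) \<partial>M)" by simp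
    also have "\<dots> = (\<integral>\<^sup>+ s. 1 * nn_cond_exp M F (\<lambda>s. ennreal (norm (E s) ^ 2)) s \<partial>M)"
      by (rule fms.nn_cond_exp_intg[symmetric]) (use mE in measurable)
    also have "\<dots> \<le> (\<integral>\<^sup>+ s. ennreal (\<omega> * norm (R s) ^ 2) \<partial>M)"
      using variance unfolding F_def[symmetric] Rdef E_def[symmetric]
      by (intro nn_integral_mono_AE) auto
    also have "\<dots> = ennreal (\<integral>s. \<omega> * norm (R s) ^ 2 \<partial>M)"
      by (rule nn_integral_eq_integral[OF iwR]) (use omega_nonneg in auto)
    finally show ?thesis .
  qed
  have nnE2: "(\<integral>\<^sup>+ s. ennreal (norm (E s) ^ 2) \<partial>M) < \<infinity>"
    using nnE by (rule le_less_trans) simp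
  have iE2: "integrable M (\<lambda>s. norm (E s) ^ 2)"
    by (rule integrableI_nonneg) (use mE nnE2 in auto)
  have intE: "(\<integral>s. norm (E s) ^ 2 \<partial>M) \<le> (\<integral>s. \<omega> * norm (R s) ^ 2 \<partial>M)"
  proof -
    have "ennreal (\<integral>s. norm (E s) ^ 2 \<partial>M) = (\<integral>\<^sup>+ s. ennreal (norm (E s) ^ 2) \<partial>M)"
      by (rule nn_integral_eq_integral[OF iE2, symmetric]) auto
    with nnE have "ennreal (\<integral>s. norm (E s) ^ 2 \<partial>M) \<le> ennreal (\<integral>s. \<omega> * norm (R s) ^ 2 \<partial>M)" by simp
    moreover have "0 \<le> (\<integral>s. \<omega> * norm (R s) ^ 2 \<partial>M)" using omega_nonneg by (intro integral_nonneg_AE) auto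
    ultimately show ?thesis by (simp add: ennreal_le_iff)
  qed
  have cross_b: "integrable M (\<lambda>s. (G s \<bullet> b) * (E s \<bullet> b)) \<and> (\<integral>s. (G s \<bullet> b) * (E s \<bullet> b) \<partial>M) = 0"
    if b: "b \<in> Basis" for b
  proof -
    have i1: "integrable M (\<lambda>s. (G s \<bullet> b) * (E s \<bullet> b))"
    proof -
      have bnd1: "integrable M (\<lambda>s. norm (G s) ^ 2 + norm (E s) ^ 2)" using iG2 iE2 by simp
      have bnd2: "(\<lambda>s. (G s \<bullet> b) * (E s \<bullet> b)) \<in> borel_measurable M" using mG mE by measurable
      have bnd3: "AE s in M. norm ((G s \<bullet> b) * (E s \<bullet> b)) \<le> norm (norm (G s) ^ 2 + norm (E s) ^ 2)"
        using prod_le_sq[OF b] by auto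
      show ?thesis by (rule Bochner_Integration.integrable_bound[OF bnd1 bnd2 bnd3])
    qed
    have i2: "integrable M (\<lambda>s. (G s \<bullet> b) * (R s \<bullet> b))"
    proof -
      have bnd1: "integrable M (\<lambda>s. norm (G s) ^ 2 + norm (R s) ^ 2)" using iG2 iR2 by simp
      have bnd2: "(\<lambda>s. (G s \<bullet> b) * (R s \<bullet> b)) \<in> borel_measurable M" using mG mR by measurable
      have bnd3: "AE s in M. norm ((G s \<bullet> b) * (R s \<bullet> b)) \<le> norm (norm (G s) ^ 2 + norm (R s) ^ 2)"
        using prod_le_sq[OF b] by auto
      show ?thesis by (rule Bochner_Integration.integrable_bound[OF bnd1 bnd2 bnd3])
    qed
    have dE: "d t s \<bullet> b = E s \<bullet> b + R s \<bullet> b" for s by (simp add: E_def inner_diff_left)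
    have i3: "integrable M (\<lambda>s. (G s \<bullet> b) * (d t s \<bullet> b))"
      unfolding dE distrib_left using i1 i2 by simp
    have mGb: "(\<lambda>s. G s \<bullet> b) \<in> borel_measurable F" using mGF by measurable
    have mdb: "(\<lambda>s. d t s \<bullet> b) \<in> borel_measurable M" using d_meas by measurable
    have "(\<integral>s. (G s \<bullet> b) * (d t s \<bullet> b) \<partial>M) = (\<integral>s. (G s \<bullet> b) * real_cond_exp M F (\<lambda>s. d t s \<bullet> b) s \<partial>M)"
      by (rule fms.real_cond_exp_intg(2)[OF i3 mGb mdb, symmetric])
    also have "\<dots> = (\<integral>s. (G s \<bullet> b) * (R s \<bullet> b) \<partial>M)"
    proof (rule integral_cong_AE)
      show "(\<lambda>s. (G s \<bullet> b) * real_cond_exp M F (\<lambda>s. d t s \<bullet> b) s) \<in> borel_measurable M"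
        using mGF mG by measurable
      show "(\<lambda>s. (G s \<bullet> b) * (R s \<bullet> b)) \<in> borel_measurable M" using mG mR by measurable
      show "AE s in M. (G s \<bullet> b) * real_cond_exp M F (\<lambda>s. d t s \<bullet> b) s = (G s \<bullet> b) * (R s \<bullet> b)"
        using unbiased[OF b] unfolding F_def[symmetric] Rdef by auto
    qed
    finally have eq: "(\<integral>s. (G s \<bullet> b) * (d t s \<bullet> b) \<partial>M) = (\<integral>s. (G s \<bullet> b) * (R s \<bullet> b) \<partial>M)" .
    have "(\<integral>s. (G s \<bullet> b) * (E s \<bullet> b) \<partial>M) = (\<integral>s. (G s \<bullet> b) * (d t s \<bullet> b) - (G s \<bullet> b) * (R s \<bullet> b) \<partial>M)"
      by (simp add: dE algebra_simps)
    also have "\<dots> = 0" using i2 i3 eq by simp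
    finally show ?thesis using i1 by simp
  qed
  have GE: "G s \<bullet> E s = (\<Sum>b\<in>Basis. (G s \<bullet> b) * (E s \<bullet> b))" for s by (rule euclidean_inner)
  have iGE: "integrable M (\<lambda>s. G s \<bullet> E s)" unfolding GE by (rule Bochner_Integration.integrable_sum) (use cross_b in blast)
  have intGE: "(\<integral>s. G s \<bullet> E s \<partial>M) = 0"
    unfolding GE using cross_b by (subst Bochner_Integration.integral_sum) auto
  have Y1: "Psi (x (Suc t) s) (u (Suc t) s) = Pr s + G s \<bullet> E s + KK * norm (E s) ^ 2" if "s \<in> space M" for s
    unfolding step_x[OF that] step_u[OF that] Psi_update Pr_def G_def E_def R_def ..
  have iS: "integrable M (\<lambda>s. Pr s + G s \<bullet> E s + KK * norm (E s) ^ 2)"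
    using iPr iGE iE2 by simp
  show "integrable M (\<lambda>s. Psi (x (Suc t) s) (u (Suc t) s))"
    using Bochner_Integration.integrable_cong[of M M "\<lambda>s. Psi (x (Suc t) s) (u (Suc t) s)" "\<lambda>s. Pr s + G s \<bullet> E s + KK * norm (E s) ^ 2"] iS Y1
    by simp
  have "(\<integral>s. Psi (x (Suc t) s) (u (Suc t) s) \<partial>M) = (\<integral>s. Pr s + G s \<bullet> E s + KK * norm (E s) ^ 2 \<partial>M)"
    by (rule Bochner_Integration.integral_cong) (auto simp: Y1)
  also have "\<dots> = (\<integral>s. Pr s \<partial>M) + (\<integral>s. G s \<bullet> E s \<partial>M) + KK * (\<integral>s. norm (E s) ^ 2 \<partial>M)"
    using iPr iGE iE2 by simp
  also have "\<dots> \<le> (\<integral>s. Pr s \<partial>M) + 0 + KK * (\<integral>s. \<omega> * norm (R s) ^ 2 \<partial>M)"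
    unfolding intGE using intE KK_nonneg by (intro add_mono mult_left_mono) auto
  also have "\<dots> = (\<integral>s. Pr s + KK * \<omega> * norm (R s) ^ 2 \<partial>M)"
    using iPr iR2 by (simp add: mult.assoc)
  also have "\<dots> \<le> (\<integral>s. cc * Y s \<partial>M)"
    using iPr iR2 iY main_det unfolding Pr_def R_def Y_def by (intro integral_mono) auto
  also have "\<dots> = cc * (\<integral>s. Psi (x t s) (u t s) \<partial>M)" unfolding Y_def by simp
  finally show "(\<integral>s. Psi (x (Suc t) s) (u (Suc t) s) \<partial>M) \<le> cc * (\<integral>s. Psi (x t s) (u t s) \<partial>M)" .
qed

end

lemma tendsto_from_sq:
  fixes X :: "nat \<Rightarrow> 'a::real_normed_vector"
  assumes "\<And>t. norm (X t - l) ^ 2 \<le> k * P t" and "P \<longlonglongrightarrow> 0"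
  shows "X \<longlonglongrightarrow> l"
proof -
  have kP: "(\<lambda>t. k * P t) \<longlonglongrightarrow> 0" using tendsto_mult_right_zero[OF assms(2)] by simp
  have "(\<lambda>t. norm (X t - l) ^ 2) \<longlonglongrightarrow> 0"
    by (rule tendsto_sandwich[of "\<lambda>_. 0" _ _ "\<lambda>t. k * P t"]) (use assms kP in auto)
  then have "(\<lambda>t. sqrt (norm (X t - l) ^ 2)) \<longlonglongrightarrow> sqrt 0" by (rule tendsto_real_sqrt)
  then have "(\<lambda>t. norm (X t - l)) \<longlonglongrightarrow> 0" by simp
  then show ?thesis by (simp add: tendsto_norm_zero_iff LIM_zero_iff)
qed

theorem theorem3:
  fixes f :: "'a::euclidean_space \<Rightarrow> real" and gradf :: "'a \<Rightarrow> 'a"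
    and h :: "'a \<Rightarrow> ereal"
    and L\<^sub>f \<mu>\<^sub>f \<mu>\<^sub>h \<gamma> \<omega> :: real
    and M :: "'w measure"
    and x u d :: "nat \<Rightarrow> 'w \<Rightarrow> 'a"
    and x0 u0 xs :: 'a
  assumes M: "prob_space M"
    and f_convex: "convex_on UNIV f"
    and f_grad: "\<And>z. (f has_derivative (\<lambda>v. gradf z \<bullet> v)) (at z)"
    and Lf_pos: "L\<^sub>f > 0"
    and f_smooth: "L\<^sub>f-lipschitz_on UNIV gradf"
    and f_strong: "convex_on UNIV (\<lambda>z. f z - \<mu>\<^sub>f / 2 * norm z ^ 2)"
    and muf_pos: "\<mu>\<^sub>f > 0"
    and h_proper: "ext_proper h" and h_closed: "ext_closed h" and h_convex: "ext_convex h"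
    and muh: "\<mu>\<^sub>h \<ge> 0" and hstar_strong: "ext_strongly_convex \<mu>\<^sub>h (conjugate h)"
    and xs_opt: "- gradf xs \<in> subdiff h xs"
    and gamma_pos: "\<gamma> > 0" and gamma_lt: "\<gamma> < 2 / L\<^sub>f"
    and omega_nonneg: "\<omega> \<ge> 0"
    and init: "\<And>s. s \<in> space M \<Longrightarrow> x 0 s = x0 \<and> u 0 s = u0"
    and step_u: "\<And>t s. s \<in> space M \<Longrightarrow>
        u (Suc t) s = u t s + (1 / (\<gamma> * (1 + \<omega>)\<^sup>2)) *\<^sub>R d t s"
    and step_x: "\<And>t s. s \<in> space M \<Longrightarrow>
        x (Suc t) s = rpfb_xhat \<gamma> gradf (x t s) (u t s) - (1 / (1 + \<omega>)) *\<^sub>R d t s"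
    and d_meas: "\<And>t. d t \<in> borel_measurable M"
    and d_int: "\<And>t. integrable M (d t)"
    and unbiased: "\<And>t b. b \<in> Basis \<Longrightarrow>
        AE s in M. real_cond_exp M (hist_algebra M x u t) (\<lambda>s. d t s \<bullet> b) s
                    = rpfb_r \<gamma> \<omega> h gradf (x t s) (u t s) \<bullet> b"
    and variance: "\<And>t.
        AE s in M. nn_cond_exp M (hist_algebra M x u t)
                     (\<lambda>s. ennreal (norm (d t s - rpfb_r \<gamma> \<omega> h gradf (x t s) (u t s)) ^ 2)) s
                   \<le> ennreal (\<omega> * norm (rpfb_r \<gamma> \<omega> h gradf (x t s) (u t s)) ^ 2)"
  shows "let us = - gradf xs;
             \<Psi> = (\<lambda>xt ut. (1 / \<gamma>) * norm (xt - xs) ^ 2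
                    + (1 + \<omega>) * (\<gamma> * (1 + \<omega>) + 2 * \<mu>\<^sub>h) * norm (ut - us) ^ 2);
             c = max (max ((1 - \<gamma> * \<mu>\<^sub>f)\<^sup>2) ((\<gamma> * L\<^sub>f - 1)\<^sup>2))
                   (1 - (1 + 2 / \<gamma> * \<mu>\<^sub>h) / ((1 + \<omega>) * (1 + \<omega> + 2 / \<gamma> * \<mu>\<^sub>h)))
         in c < 1
            \<and> (\<forall>t. (\<integral>\<^sup>+ s. ennreal (\<Psi> (x t s) (u t s)) \<partial>M) \<le> ennreal (c ^ t * \<Psi> x0 u0))
            \<and> (AE s in M. (\<lambda>t. x t s) \<longlonglongrightarrow> xs)
            \<and> (AE s in M. (\<lambda>t. rpfb_xhat \<gamma> gradf (x t s) (u t s)) \<longlonglongrightarrow> xs)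
            \<and> (AE s in M. (\<lambda>t. u t s) \<longlonglongrightarrow> us)"
proof -
  interpret R: rpfb_setting f gradf h "L\<^sub>f" "\<mu>\<^sub>f" "\<mu>\<^sub>h" \<gamma> \<omega> xs
    by (rule rpfb_setting.intro[OF f_grad Lf_pos f_smooth f_strong muf_pos h_proper h_closed h_convex
          muh hstar_strong xs_opt gamma_pos gamma_lt omega_nonneg])
  interpret prob_space M by (rule M)
  have gcont: "continuous_on UNIV gradf" by (rule lipschitz_on_continuous_on[OF f_smooth])
  have gmeas[measurable]: "gradf \<in> borel_measurable borel" by (rule borel_measurable_continuous_onI[OF gcont])
  have mxu: "x i \<in> borel_measurable M \<and> u i \<in> borel_measurable M" for i
  proof (induction i)
    case 0
    have "x 0 \<in> borel_measurable M \<longleftrightarrow> (\<lambda>_. x0) \<in> borel_measurable M"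
      by (rule measurable_cong) (use init in auto)
    moreover have "u 0 \<in> borel_measurable M \<longleftrightarrow> (\<lambda>_. u0) \<in> borel_measurable M"
      by (rule measurable_cong) (use init in auto)
    ultimately show ?case by simp
  next
    case (Suc i)
    then have [measurable]: "x i \<in> borel_measurable M" "u i \<in> borel_measurable M" by auto
    have [measurable]: "d i \<in> borel_measurable M" by (rule d_meas)
    have "x (Suc i) \<in> borel_measurable M \<longleftrightarrow>
        (\<lambda>s. x i s - \<gamma> *\<^sub>R gradf (x i s) - \<gamma> *\<^sub>R u i s - (1 / (1 + \<omega>)) *\<^sub>R d i s) \<in> borel_measurable M"
      by (rule measurable_cong) (simp add: step_x rpfb_xhat_def)
    moreover have "u (Suc i) \<in> borel_measurable M \<longleftrightarrow>
        (\<lambda>s. u i s + (1 / (\<gamma> * (1 + \<omega>)\<^sup>2)) *\<^sub>R d i s) \<in> borel_measurable M"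
      by (rule measurable_cong) (simp add: step_u)
    ultimately show ?case by simp
  qed
  have meas: "(\<lambda>s. (x i s, u i s)) \<in> measurable M borel" for i
  proof -
    have "(\<lambda>s. (x i s, u i s)) \<in> measurable M (borel \<Otimes>\<^sub>M borel)"
      using mxu[of i] by (intro measurable_Pair) auto
    then show ?thesis by (simp add: borel_prod)
  qed
  have IB: "integrable M (\<lambda>s. R.Psi (x t s) (u t s)) \<and> (\<integral>s. R.Psi (x t s) (u t s) \<partial>M) \<le> R.cc ^ t * R.Psi x0 u0" for t
  proof (induction t)
    case 0
    have "integrable M (\<lambda>s. R.Psi (x 0 s) (u 0 s)) \<longleftrightarrow> integrable M (\<lambda>s. R.Psi x0 u0)"
      by (rule Bochner_Integration.integrable_cong) (use init in auto)
    moreover have "(\<integral>s. R.Psi (x 0 s) (u 0 s) \<partial>M) = (\<integral>s. R.Psi x0 u0 \<partial>M)"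
      by (rule Bochner_Integration.integral_cong) (use init in auto)
    ultimately show ?case by (simp add: prob_space)
  next
    case (Suc t)
    have st: "integrable M (\<lambda>s. R.Psi (x (Suc t) s) (u (Suc t) s))"
          "(\<integral>s. R.Psi (x (Suc t) s) (u (Suc t) s) \<partial>M) \<le> R.cc * (\<integral>s. R.Psi (x t s) (u t s) \<partial>M)"
      using R.prob_step[where M=M and x=x and u=u and d=d and t=t, OF M meas step_u[where t=t] step_x[where t=t] d_meas[where t=t] unbiased[where t=t] variance[where t=t]] Suc by auto
    have "R.cc * (\<integral>s. R.Psi (x t s) (u t s) \<partial>M) \<le> R.cc * (R.cc ^ t * R.Psi x0 u0)"
      using Suc R.cc_bounds by (intro mult_left_mono) auto
    with st show ?case by simp
  qed
  have nnb: "(\<integral>\<^sup>+ s. ennreal (R.Psi (x t s) (u t s)) \<partial>M) \<le> ennreal (R.cc ^ t * R.Psi x0 u0)" for t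
  proof -
    have "(\<integral>\<^sup>+ s. ennreal (R.Psi (x t s) (u t s)) \<partial>M) = ennreal (\<integral>s. R.Psi (x t s) (u t s) \<partial>M)"
      using IB[of t] R.Psi_nonneg by (intro nn_integral_eq_integral) auto
    then show ?thesis using IB[of t] by (simp add: ennreal_leI)
  qed
  have mPsi: "(\<lambda>s. R.Psi (x t s) (u t s)) \<in> borel_measurable M" for t
    using meas_cont_comp[OF R.cont_Psi meas] by simp
  have geo: "(\<lambda>t. R.cc ^ t * R.Psi x0 u0) sums (1 / (1 - R.cc) * R.Psi x0 u0)"
    using sums_mult2[OF geometric_sums[of R.cc]] R.cc_bounds by simp
  have "(\<integral>\<^sup>+ s. (\<Sum>t. ennreal (R.Psi (x t s) (u t s))) \<partial>M) = (\<Sum>t. \<integral>\<^sup>+ s. ennreal (R.Psi (x t s) (u t s)) \<partial>M)"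
    by (rule nn_integral_suminf) (use mPsi in measurable)
  also have "\<dots> \<le> (\<Sum>t. ennreal (R.cc ^ t * R.Psi x0 u0))"
    by (intro suminf_le nnb) auto
  also have "\<dots> = ennreal (1 / (1 - R.cc) * R.Psi x0 u0)"
    by (rule suminf_ennreal_eq[OF _ geo]) (use R.cc_bounds R.Psi_nonneg in simp)
  also have "\<dots> < \<infinity>" by simp
  finally have "(\<integral>\<^sup>+ s. (\<Sum>t. ennreal (R.Psi (x t s) (u t s))) \<partial>M) \<noteq> \<infinity>"
    by simp
  then have AEfin: "AE s in M. (\<Sum>t. ennreal (R.Psi (x t s) (u t s))) \<noteq> \<infinity>"
    by (intro nn_integral_PInf_AE) (use mPsi in measurable)
  have AE0: "AE s in M. (\<lambda>t. R.Psi (x t s) (u t s)) \<longlonglongrightarrow> 0"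
    using AEfin
  proof eventually_elim
    case (elim s)
    have "summable (\<lambda>t. R.Psi (x t s) (u t s))"
      by (rule summable_suminf_not_top) (use elim R.Psi_nonneg in auto)
    then show ?case by (rule summable_LIMSEQ_zero)
  qed
  have cx: "norm (x t s - xs) ^ 2 \<le> \<gamma> * R.Psi (x t s) (u t s)" for t s
  proof -
    have "(1 / \<gamma>) * norm (x t s - xs) ^ 2 \<le> R.Psi (x t s) (u t s)"
      unfolding R.Psi_CC using R.CC_pos by simp
    then show ?thesis using gamma_pos by (simp add: field_simps)
  qed
  have cu: "norm (u t s - R.us) ^ 2 \<le> (1 / R.CC) * R.Psi (x t s) (u t s)" for t s
  proof -
    have "R.CC * norm (u t s - R.us) ^ 2 \<le> R.Psi (x t s) (u t s)"
      unfolding R.Psi_CC using gamma_pos by simp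
    then show ?thesis using R.CC_pos by (simp add: field_simps)
  qed
  have AEx: "AE s in M. (\<lambda>t. x t s) \<longlonglongrightarrow> xs"
    using AE0 by eventually_elim (rule tendsto_from_sq[OF cx])
  have AEu: "AE s in M. (\<lambda>t. u t s) \<longlonglongrightarrow> R.us"
    using AE0 by eventually_elim (rule tendsto_from_sq[OF cu])
  have AExh: "AE s in M. (\<lambda>t. rpfb_xhat \<gamma> gradf (x t s) (u t s)) \<longlonglongrightarrow> xs"
    using AEx AEu
  proof eventually_elim
    case (elim s)
    have g: "(\<lambda>t. gradf (x t s)) \<longlonglongrightarrow> gradf xs"
      using continuous_on_tendsto_compose[OF gcont elim(1)] by simp
    have "(\<lambda>t. x t s - \<gamma> *\<^sub>R gradf (x t s) - \<gamma> *\<^sub>R u t s) \<longlonglongrightarrow> xs - \<gamma> *\<^sub>R gradf xs - \<gamma> *\<^sub>R R.us"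
      by (intro tendsto_intros elim g)
    then show ?case by (simp add: rpfb_xhat_def R.us_def)
  qed
  have main: "R.cc < 1 \<and> (\<forall>t. (\<integral>\<^sup>+ s. ennreal (R.Psi (x t s) (u t s)) \<partial>M) \<le> ennreal (R.cc ^ t * R.Psi x0 u0))
      \<and> (AE s in M. (\<lambda>t. x t s) \<longlonglongrightarrow> xs)
      \<and> (AE s in M. (\<lambda>t. rpfb_xhat \<gamma> gradf (x t s) (u t s)) \<longlonglongrightarrow> xs)
      \<and> (AE s in M. (\<lambda>t. u t s) \<longlonglongrightarrow> R.us)"
    using R.cc_bounds nnb AEx AExh AEu by blast
  show ?thesis using main unfolding Let_def R.Psi_def R.us_def R.cc_def .
qed


end
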